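(* Fix a finite set $\Omega$, an integer $k\ge2$ and a finite set $\Psi$ of functions $\Omega^k\to(0,\infty)$. For every $\varepsilon>0$ and $R>0$ there is $\varepsilon'>0$ such that the following holds. Let $G$ be any factor graph, $U\subset V(G)$ a cavity with $|U|\le R$ and $|\partial U|\le R$, and $Y$ the set of variable nodes at distance $2$ from $U$ (in the bipartite graph of $G$), and suppose every constraint node $a$ with $\partial a\cap U\ne\emptyset$ has $\psi_a\in\Psi$. Suppose $\big\|\mu_{G\setminus\partial U,Y}-\bigotimes_{y\in Y}\mu_{G\setminus\partial U,y}\big\|_{TV}<\varepsilon'$. Then $\sum_{\sigma\in\Omega^U}|\bar\mu_{G,U}(\sigma)-\mu_{G,U}(\sigma)|<\varepsilon$. Moreover, if the hypothesis holds for a cavity $U=\{x\}$ consisting of a single variable node $x$ with $|\partial x|\le R$, then, letting $\mu$ denote the standard messages $(\mu_{G,y\to a},\mu_{G,a\to y})$ and $\hat\mu=\mathrm{BP}(\mu)$, $\sum_{a\in\partial x}\sum_{\sigma\in\Omega}\big(|\mu_{G,x\to a}(\sigma)-\hat\mu_{G,x\to a}(\sigma)|+|\mu_{G,a\to x}(\sigma)-\hat\mu_{G,a\to x}(\sigma)|\big)<\varepsilon$.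
   Context: A factor graph $G=(V,F,(\partial a)_{a\in F},(\psi_a)_{a\in F})$ has variable nodes $V$, constraint nodes $F$, for each $a$ a tuple $\partial a\in V^{k_a}$ of neighbours and a weight function $\psi_a:\Omega^{k_a}\to(0,\infty)$; its Gibbs distribution is $\mu_G(\sigma)\propto\prod_{a\in F}\psi_a(\sigma|_{\partial a})$ and $\mu_{G,U}$ denotes the marginal on $U\subset V$. $G$ induces a bipartite graph joining $a$ to its neighbours $\partial a$ (also viewed as a set); $\partial x$ is the set of constraint nodes adjacent to $x$. $\|p-q\|_{TV}=\frac12\sum|p-q|$. $\emptyset\ne U\subset V$ is a cavity if (CAV1) the induced subgraph $G[U]$ (variable nodes $U$ and all $a$ with $\partial a\subset U$) is acyclic; (CAV2) every $a$ with $\partial a\not\subset U$ has $|\partial a\cap U|\le1$; (CAV3) for distinct $a,b$ with $\partial a\cap U\ne\emptyset\ne\partial b\cap U$, $(\partial a\cap\partial b)\setminus U=\emptyset$. $\partial U$ is the set of $a$ with $\partial a\cap U\ne\emptyset\ne\partial a\setminus U$; $x_{a\to U}$ is the unique node of $U\cap\partial a$. $G\setminus\partial U$ is the factor graph obtained by deleting the constraint nodes in $\partial U$. Standard messages (unconditioned): $\mu_{G,a\to x}(\tau)\propto\sum_{\sigma}\mathbf 1\{\sigma_x=\tau\}\prod_{b\in F\setminus(\partial x\setminus\{a\})}\psi_b(\sigma|_{\partial b})$ (the marginal of $x$ after deleting all constraint nodes of $\partial x$ except $a$) and $\mu_{G,x\to a}(\tau)\propto\sum_\sigma\mathbf 1\{\sigma_x=\tau\}\prod_{b\in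 F\setminus\{a\}}\psi_b(\sigma|_{\partial b})$. $\bar\mu_{G,U}(\sigma)\propto\mu_{G[U]}(\sigma)\prod_{a\in\partial U}\mu_{G,a\to x_{a\to U}}(\sigma_{x_{a\to U}})$ for $\sigma\in\Omega^U$, where $\mu_{G[U]}(\sigma)\propto\prod_{\partial a\subset U}\psi_a(\sigma|_{\partial a})$. The Belief Propagation operator maps messages $\nu=(\nu_{x\to a},\nu_{a\to x})$ to $\hat\nu$ with $\hat\nu_{x\to a}(\sigma)\propto\prod_{b\in\partial x\setminus a}\nu_{b\to x}(\sigma)$ and $\hat\nu_{a\to x}(\sigma)\propto\sum_{\tau\in\Omega^{\partial a}}\mathbf 1\{\tau_x=\sigma\}\psi_a(\tau)\prod_{y\in\partial a\setminus x}\nu_{y\to a}(\tau_y)$. *)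

theory Defs
  imports Complex_Main "HOL-Library.FuncSet"
begin

text \<open>Variable nodes of type 'v, constraint nodes of type 'f, spins of type 'c
  (the finite set Omega is rendered as a finite type). nb a is the tuple of neighbours of a,
  psi a is its weight function on tuples (meaningful on tuples of length length (nb a)).\<close>

record ('v,'f,'c) fg =
  vars :: "'v set"
  facs :: "'f set"
  nb   :: "'f \<Rightarrow> 'v list"
  psi  :: "'f \<Rightarrow> 'c list \<Rightarrow> real"

definition fg_wf :: "('v,'f,'c) fg \<Rightarrow> bool" where
  "fg_wf G \<longleftrightarrow> finite (vars G) \<and> finite (facs G) \<and>
     (\<forall>a\<in>facs G. set (nb G a) \<subseteq> vars G \<and>
        (\<forall>\<tau>. length \<tau> = length (nb G a) \<longrightarrow> psi G a \<tau> > 0))"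

definition configs :: "'v set \<Rightarrow> ('v \<Rightarrow> 'c) set" where
  "configs U = PiE U (\<lambda>_. UNIV)"

definition weight :: "('v,'f,'c) fg \<Rightarrow> ('v \<Rightarrow> 'c) \<Rightarrow> real" where
  "weight G \<sigma> = (\<Prod>a\<in>facs G. psi G a (map \<sigma> (nb G a)))"

definition gibbs :: "('v,'f,'c) fg \<Rightarrow> ('v \<Rightarrow> 'c) \<Rightarrow> real" where
  "gibbs G \<sigma> = weight G \<sigma> / (\<Sum>\<tau>\<in>configs (vars G). weight G \<tau>)"

definition marg :: "('v,'f,'c) fg \<Rightarrow> 'v set \<Rightarrow> ('v \<Rightarrow> 'c) \<Rightarrow> real" where
  "marg G U \<tau> = (\<Sum>\<sigma>\<in>configs (vars G). if restrict \<sigma> U = \<tau> then gibbs G \<sigma> else 0)"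

definition marg1 :: "('v,'f,'c) fg \<Rightarrow> 'v \<Rightarrow> 'c \<Rightarrow> real" where
  "marg1 G x c = (\<Sum>\<sigma>\<in>configs (vars G). if \<sigma> x = c then gibbs G \<sigma> else 0)"

definition dvar :: "('v,'f,'c) fg \<Rightarrow> 'v \<Rightarrow> 'f set" where
  "dvar G x = {a\<in>facs G. x \<in> set (nb G a)}"

definition del_facs :: "('v,'f,'c) fg \<Rightarrow> 'f set \<Rightarrow> ('v,'f,'c) fg" where
  "del_facs G D = G\<lparr>facs := facs G - D\<rparr>"

definition induced :: "('v,'f,'c) fg \<Rightarrow> 'v set \<Rightarrow> ('v,'f,'c) fg" where
  "induced G U = G\<lparr>vars := U, facs := {a\<in>facs G. set (nb G a) \<subseteq> U}\<rparr>"

definition badj :: "('v,'f,'c) fg \<Rightarrow> 'v + 'f \<Rightarrow> 'v + 'f \<Rightarrow> bool" where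
  "badj G u w \<longleftrightarrow> (\<exists>x a. a \<in> facs G \<and> x \<in> vars G \<and> x \<in> set (nb G a) \<and>
       ((u = Inl x \<and> w = Inr a) \<or> (u = Inr a \<and> w = Inl x)))"

definition has_cycle :: "('v,'f,'c) fg \<Rightarrow> bool" where
  "has_cycle G \<longleftrightarrow> (\<exists>cs. length cs \<ge> 3 \<and> distinct cs \<and>
       (\<forall>i<length cs. badj G (cs ! i) (cs ! (Suc i mod length cs))))"

definition cavity :: "('v,'f,'c) fg \<Rightarrow> 'v set \<Rightarrow> bool" where
  "cavity G U \<longleftrightarrow> U \<noteq> {} \<and> U \<subseteq> vars G \<and>
     \<not> has_cycle (induced G U) \<and>
     (\<forall>a\<in>facs G. \<not> set (nb G a) \<subseteq> U \<longrightarrow> card (set (nb G a) \<inter> U) \<le> 1) \<and>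
     (\<forall>a\<in>facs G. \<forall>b\<in>facs G. a \<noteq> b \<and> set (nb G a) \<inter> U \<noteq> {} \<and> set (nb G b) \<inter> U \<noteq> {}
         \<longrightarrow> (set (nb G a) \<inter> set (nb G b)) - U = {})"

definition bdry :: "('v,'f,'c) fg \<Rightarrow> 'v set \<Rightarrow> 'f set" where
  "bdry G U = {a\<in>facs G. set (nb G a) \<inter> U \<noteq> {} \<and> set (nb G a) - U \<noteq> {}}"

definition xto :: "('v,'f,'c) fg \<Rightarrow> 'f \<Rightarrow> 'v set \<Rightarrow> 'v" where
  "xto G a U = (THE x. x \<in> U \<inter> set (nb G a))"

definition msg_fv :: "('v,'f,'c) fg \<Rightarrow> 'f \<Rightarrow> 'v \<Rightarrow> 'c \<Rightarrow> real" where
  "msg_fv G a x c = marg1 (del_facs G (dvar G x - {a})) x c"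

definition msg_vf :: "('v,'f,'c) fg \<Rightarrow> 'v \<Rightarrow> 'f \<Rightarrow> 'c \<Rightarrow> real" where
  "msg_vf G x a c = marg1 (del_facs G {a}) x c"

definition barmu :: "('v,'f,'c) fg \<Rightarrow> 'v set \<Rightarrow> ('v \<Rightarrow> 'c) \<Rightarrow> real" where
  "barmu G U \<sigma> =
     (let w = (\<lambda>\<tau>. gibbs (induced G U) \<tau> *
                    (\<Prod>a\<in>bdry G U. msg_fv G a (xto G a U) (\<tau> (xto G a U))))
      in w \<sigma> / (\<Sum>\<tau>\<in>configs U. w \<tau>))"

definition dist2 :: "('v,'f,'c) fg \<Rightarrow> 'v set \<Rightarrow> 'v set" where
  "dist2 G U = {y\<in>vars G. y \<notin> U \<and> (\<exists>a\<in>facs G. y \<in> set (nb G a) \<and> set (nb G a) \<inter> U \<noteq> {})}"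

definition tv_prod :: "('v,'f,'c) fg \<Rightarrow> 'v set \<Rightarrow> real" where
  "tv_prod G Y = 1/2 * (\<Sum>\<tau>\<in>configs Y. \<bar>marg G Y \<tau> - (\<Prod>y\<in>Y. marg1 G y (\<tau> y))\<bar>)"

definition bp_vf :: "('v,'f,'c) fg \<Rightarrow> ('f \<Rightarrow> 'v \<Rightarrow> 'c \<Rightarrow> real) \<Rightarrow> 'v \<Rightarrow> 'f \<Rightarrow> 'c \<Rightarrow> real" where
  "bp_vf G nu_fv x a c =
     (let w = (\<lambda>s. \<Prod>b\<in>dvar G x - {a}. nu_fv b x s) in w c / (\<Sum>s\<in>UNIV. w s))"

definition bp_fv :: "('v,'f,'c) fg \<Rightarrow> ('v \<Rightarrow> 'f \<Rightarrow> 'c \<Rightarrow> real) \<Rightarrow> 'f \<Rightarrow> 'v \<Rightarrow> 'c \<Rightarrow> real" where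
  "bp_fv G nu_vf a x c =
     (let w = (\<lambda>s. \<Sum>\<tau>\<in>configs (set (nb G a)).
                   if \<tau> x = s then psi G a (map \<tau> (nb G a)) *
                        (\<Prod>y\<in>set (nb G a) - {x}. nu_vf y a (\<tau> y)) else 0)
      in w c / (\<Sum>s\<in>UNIV. w s))"

definition psi_in :: "('v,'f,'c) fg \<Rightarrow> nat \<Rightarrow> ('c list \<Rightarrow> real) set \<Rightarrow> 'f \<Rightarrow> bool" where
  "psi_in G k Psi a \<longleftrightarrow> length (nb G a) = k \<and>
     (\<exists>\<psi>\<in>Psi. \<forall>\<tau>. length \<tau> = k \<longrightarrow> psi G a \<tau> = \<psi> \<tau>)"

end

theory Submission
  imports Defs
begin



lemma configs_finite[simp]: "finite U \<Longrightarrow> finite (configs U :: ('v \<Rightarrow> 'c::finite) set)"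
  unfolding configs_def by (intro finite_PiE) auto

lemma configs_mem: "\<sigma> \<in> configs U \<longleftrightarrow> (\<forall>v. v \<notin> U \<longrightarrow> \<sigma> v = undefined)"
  unfolding configs_def PiE_def extensional_def by auto

lemma restrict_configs[simp]: "restrict \<sigma> U \<in> configs U"
  unfolding configs_mem by auto

lemma configs_nonempty: "configs U \<noteq> {}"
  using restrict_configs by blast

definition mrg :: "'v set \<Rightarrow> ('v \<Rightarrow> 'c) \<Rightarrow> ('v \<Rightarrow> 'c) \<Rightarrow> 'v \<Rightarrow> 'c" where
  "mrg A \<sigma> \<tau> = (\<lambda>v. if v \<in> A then \<sigma> v else \<tau> v)"

lemma split_sum:
  fixes F :: "('v \<Rightarrow> 'c) \<Rightarrow> real"
  assumes "finite A" "finite B" "A \<inter> B = {}"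
  shows "(\<Sum>\<rho>\<in>configs (A \<union> B). F \<rho>) = (\<Sum>\<sigma>\<in>configs A. \<Sum>\<tau>\<in>configs B. F (mrg A \<sigma> \<tau>))"
proof -
  have "(\<Sum>\<sigma>\<in>configs A. \<Sum>\<tau>\<in>configs B. F (mrg A \<sigma> \<tau>)) = (\<Sum>(\<sigma>,\<tau>)\<in>configs A \<times> configs B. F (mrg A \<sigma> \<tau>))"
    by (rule sum.cartesian_product)
  also have "\<dots> = (\<Sum>\<rho>\<in>configs (A \<union> B). F \<rho>)"
    using assms
    by (intro sum.reindex_bij_witness[of _ "\<lambda>\<rho>. (restrict \<rho> A, restrict \<rho> B)" "\<lambda>(\<sigma>,\<tau>). mrg A \<sigma> \<tau>"])
       (auto simp: configs_mem mrg_def fun_eq_iff)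
  finally show ?thesis by simp
qed

lemma mrg_configs: "\<sigma> \<in> configs A \<Longrightarrow> \<tau> \<in> configs B \<Longrightarrow> mrg A \<sigma> \<tau> \<in> configs (A \<union> B)"
  by (auto simp: configs_mem mrg_def)

lemma fiber_sum:
  fixes g \<Phi> :: "_ \<Rightarrow> real"
  assumes "finite S" "finite T" "\<And>\<rho>. \<rho> \<in> S \<Longrightarrow> h \<rho> \<in> T"
  shows "(\<Sum>\<tau>\<in>T. (\<Sum>\<rho>\<in>S. if h \<rho> = \<tau> then g \<rho> else 0) * \<Phi> \<tau>) = (\<Sum>\<rho>\<in>S. g \<rho> * \<Phi> (h \<rho>))"
proof -
  have "(\<Sum>\<tau>\<in>T. (\<Sum>\<rho>\<in>S. if h \<rho> = \<tau> then g \<rho> else 0) * \<Phi> \<tau>)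
      = (\<Sum>\<tau>\<in>T. \<Sum>\<rho>\<in>S. if h \<rho> = \<tau> then g \<rho> * \<Phi> \<tau> else 0)"
    by (simp add: sum_distrib_right) (intro sum.cong refl, auto)
  also have "\<dots> = (\<Sum>\<rho>\<in>S. \<Sum>\<tau>\<in>T. if h \<rho> = \<tau> then g \<rho> * \<Phi> \<tau> else 0)"
    by (rule sum.swap)
  also have "\<dots> = (\<Sum>\<rho>\<in>S. g \<rho> * \<Phi> (h \<rho>))"
    using assms by (intro sum.cong refl) (simp add: sum.delta)
  finally show ?thesis .
qed

definition loc :: "'v set \<Rightarrow> (('v \<Rightarrow> 'c) \<Rightarrow> 'b) \<Rightarrow> bool" where
  "loc A f \<longleftrightarrow> (\<forall>\<rho> \<rho>'. (\<forall>y\<in>A. \<rho> y = \<rho>' y) \<longrightarrow> f \<rho> = f \<rho>')"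

lemma loc_mono: "loc A f \<Longrightarrow> A \<subseteq> B \<Longrightarrow> loc B f"
  unfolding loc_def by blast

lemma locD: "loc A f \<Longrightarrow> (\<And>y. y \<in> A \<Longrightarrow> \<rho> y = \<rho>' y) \<Longrightarrow> f \<rho> = f \<rho>'"
  unfolding loc_def by blast

lemma loc_restrict: "loc A f \<Longrightarrow> f (restrict \<rho> A) = f \<rho>"
  unfolding loc_def by auto

definition pr :: "'v set \<Rightarrow> ('v \<Rightarrow> 'c \<Rightarrow> real) \<Rightarrow> ('v \<Rightarrow> 'c) \<Rightarrow> real" where
  "pr S p \<tau> = (\<Prod>y\<in>S. p y (\<tau> y))"

lemma sum_pr: "finite S \<Longrightarrow> (\<Sum>\<tau>\<in>configs S. pr S p \<tau>) = (\<Prod>y\<in>S. \<Sum>c\<in>UNIV. p y (c::'c::finite))"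
  unfolding pr_def configs_def by (subst prod_sum_PiE) auto

lemma sum_pr1: "finite S \<Longrightarrow> (\<And>y. y \<in> S \<Longrightarrow> (\<Sum>c\<in>UNIV. p y (c::'c::finite)) = 1) \<Longrightarrow> (\<Sum>\<tau>\<in>configs S. pr S p \<tau>) = 1"
  by (simp add: sum_pr)

lemma pr_mrg: "A \<subseteq> Y \<Longrightarrow> finite Y \<Longrightarrow> pr Y p (mrg A \<sigma> \<tau>) = pr A p \<sigma> * pr (Y - A) p \<tau>"
proof -
  assume a: "A \<subseteq> Y" "finite Y"
  have "Y = A \<union> (Y - A)" using a by auto
  hence "pr Y p (mrg A \<sigma> \<tau>) = (\<Prod>y\<in>A \<union> (Y - A). p y (mrg A \<sigma> \<tau> y))" unfolding pr_def by simp
  also have "\<dots> = (\<Prod>y\<in>A. p y (mrg A \<sigma> \<tau> y)) * (\<Prod>y\<in>Y - A. p y (mrg A \<sigma> \<tau> y))"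
    using a by (intro prod.union_disjoint) (auto intro: finite_subset)
  also have "\<dots> = pr A p \<sigma> * pr (Y - A) p \<tau>"
    unfolding pr_def mrg_def by (intro arg_cong2[where f="(*)"] prod.cong) auto
  finally show ?thesis .
qed

lemma pr_factor:
  fixes p :: "'v \<Rightarrow> 'c::finite \<Rightarrow> real"
  assumes Y: "finite Y" "A \<subseteq> Y" and p1: "\<And>y. y \<in> Y \<Longrightarrow> (\<Sum>c\<in>UNIV. p y c) = 1"
    and f: "loc A f" and g: "loc (Y - A) g"
  shows "(\<Sum>\<tau>\<in>configs Y. pr Y p \<tau> * (f \<tau> * g \<tau>)) =
         (\<Sum>\<tau>\<in>configs A. pr A p \<tau> * f \<tau>) * (\<Sum>\<tau>\<in>configs (Y - A). pr (Y - A) p \<tau> * g \<tau>)"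
proof -
  have fin: "finite A" "finite (Y - A)" using Y finite_subset by auto
  have YY: "Y = A \<union> (Y - A)" using Y by auto
  have fm: "f (mrg A \<sigma> \<tau>) = f \<sigma>" for \<sigma> \<tau> by (rule locD[OF f]) (auto simp: mrg_def)
  have gm: "g (mrg A \<sigma> \<tau>) = g \<tau>" for \<sigma> \<tau> by (rule locD[OF g]) (auto simp: mrg_def)
  have "(\<Sum>\<tau>\<in>configs Y. pr Y p \<tau> * (f \<tau> * g \<tau>)) = (\<Sum>\<tau>\<in>configs (A \<union> (Y - A)). pr Y p \<tau> * (f \<tau> * g \<tau>))"
    using YY by simp
  also have "\<dots> = (\<Sum>\<sigma>\<in>configs A. \<Sum>\<tau>\<in>configs (Y - A). pr A p \<sigma> * pr (Y - A) p \<tau> * (f \<sigma> * g \<tau>))"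
    using fin Y by (subst split_sum) (auto simp: pr_mrg fm gm)
  also have "\<dots> = (\<Sum>\<tau>\<in>configs A. pr A p \<tau> * f \<tau>) * (\<Sum>\<tau>\<in>configs (Y - A). pr (Y - A) p \<tau> * g \<tau>)"
    by (simp add: sum_product mult_ac)
  finally show ?thesis .
qed

lemma pr_marg:
  fixes p :: "'v \<Rightarrow> 'c::finite \<Rightarrow> real"
  assumes Y: "finite Y" "A \<subseteq> Y" and p1: "\<And>y. y \<in> Y \<Longrightarrow> (\<Sum>c\<in>UNIV. p y c) = 1"
    and f: "loc A f"
  shows "(\<Sum>\<tau>\<in>configs Y. pr Y p \<tau> * f \<tau>) = (\<Sum>\<tau>\<in>configs A. pr A p \<tau> * f \<tau>)"
proof -
  have "(\<Sum>\<tau>\<in>configs Y. pr Y p \<tau> * f \<tau>) = (\<Sum>\<tau>\<in>configs Y. pr Y p \<tau> * (f \<tau> * (\<lambda>_. 1) \<tau>))" by simp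
  also have "\<dots> = (\<Sum>\<tau>\<in>configs A. pr A p \<tau> * f \<tau>) * (\<Sum>\<tau>\<in>configs (Y - A). pr (Y - A) p \<tau> * 1)"
    by (rule pr_factor[OF Y p1 f]) (auto simp: loc_def)
  also have "(\<Sum>\<tau>\<in>configs (Y - A). pr (Y - A) p \<tau> * 1) = 1"
    using Y p1 by (simp, intro sum_pr1) auto
  finally show ?thesis by simp
qed

lemma pr_factor2:
  fixes p :: "'v \<Rightarrow> 'c::finite \<Rightarrow> real"
  assumes Y: "finite Y" "A \<subseteq> Y" and p1: "\<And>y. y \<in> Y \<Longrightarrow> (\<Sum>c\<in>UNIV. p y c) = 1"
    and f: "loc A f" and g: "loc (Y - A) g"
  shows "(\<Sum>\<tau>\<in>configs Y. pr Y p \<tau> * (f \<tau> * g \<tau>)) =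
         (\<Sum>\<tau>\<in>configs Y. pr Y p \<tau> * f \<tau>) * (\<Sum>\<tau>\<in>configs Y. pr Y p \<tau> * g \<tau>)"
proof -
  have "Y - A \<subseteq> Y" by auto
  show ?thesis
    using pr_factor[OF Y p1 f g] pr_marg[OF Y p1 f] pr_marg[OF Y(1) \<open>Y - A \<subseteq> Y\<close> p1 g] by simp
qed

lemma pr_factor_prod:
  fixes p :: "'v \<Rightarrow> 'c::finite \<Rightarrow> real"
  assumes Y: "finite Y" and p1: "\<And>y. y \<in> Y \<Longrightarrow> (\<Sum>c\<in>UNIV. p y c) = 1"
    and I: "finite I" and sub: "\<And>i. i \<in> I \<Longrightarrow> A i \<subseteq> Y"
    and dis: "\<And>i j. i \<in> I \<Longrightarrow> j \<in> I \<Longrightarrow> i \<noteq> j \<Longrightarrow> A i \<inter> A j = {}"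
    and f: "\<And>i. i \<in> I \<Longrightarrow> loc (A i) (f i)"
  shows "(\<Sum>\<tau>\<in>configs Y. pr Y p \<tau> * (\<Prod>i\<in>I. f i \<tau>)) = (\<Prod>i\<in>I. \<Sum>\<tau>\<in>configs Y. pr Y p \<tau> * f i \<tau>)"
  using I sub dis f
proof (induction I rule: finite_induct)
  case empty
  then show ?case using Y p1 by (simp add: sum_pr1)
next
  case (insert i I)
  have l: "loc (Y - A i) (\<lambda>\<tau>. \<Prod>j\<in>I. f j \<tau>)"
    unfolding loc_def
  proof (intro allI impI prod.cong refl)
    fix \<rho> \<rho>' :: "'v \<Rightarrow> 'c" and j assume h: "\<forall>y\<in>Y - A i. \<rho> y = \<rho>' y" and j: "j \<in> I"
    have "j \<noteq> i" using j insert.hyps by auto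
    hence "A j \<inter> A i = {}" using insert.prems(2)[of j i] j by auto
    hence "A j \<subseteq> Y - A i" using insert.prems(1)[of j] j by auto
    thus "f j \<rho> = f j \<rho>'" using locD[OF insert.prems(3)] j h by blast
  qed
  have "(\<Sum>\<tau>\<in>configs Y. pr Y p \<tau> * (\<Prod>j\<in>insert i I. f j \<tau>)) =
        (\<Sum>\<tau>\<in>configs Y. pr Y p \<tau> * (f i \<tau> * (\<Prod>j\<in>I. f j \<tau>)))"
    using insert.hyps by simp
  also have "\<dots> = (\<Sum>\<tau>\<in>configs Y. pr Y p \<tau> * f i \<tau>) * (\<Sum>\<tau>\<in>configs Y. pr Y p \<tau> * (\<Prod>j\<in>I. f j \<tau>))"
    by (rule pr_factor2[OF Y insert.prems(1) p1 insert.prems(3) l]) auto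
  also have "(\<Sum>\<tau>\<in>configs Y. pr Y p \<tau> * (\<Prod>j\<in>I. f j \<tau>)) = (\<Prod>j\<in>I. \<Sum>\<tau>\<in>configs Y. pr Y p \<tau> * f j \<tau>)"
    using insert.prems by (intro insert.IH) auto
  finally show ?case using insert.hyps by simp
qed




lemma norm_L1:
  fixes f g :: "'a \<Rightarrow> real"
  assumes X: "finite X" and f: "\<And>x. x \<in> X \<Longrightarrow> f x \<ge> 0" and g: "\<And>x. x \<in> X \<Longrightarrow> g x \<ge> 0"
    and Sg: "sum g X > 0"
  shows "(\<Sum>x\<in>X. \<bar>f x / sum f X - g x / sum g X\<bar>) \<le> 2 * (\<Sum>x\<in>X. \<bar>f x - g x\<bar>) / sum g X"
proof (cases "sum f X = 0")
  case True
  hence f0: "\<And>x. x \<in> X \<Longrightarrow> f x = 0" using sum_nonneg_eq_0_iff[OF X] f by blast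
  have "(\<Sum>x\<in>X. \<bar>f x / sum f X - g x / sum g X\<bar>) = (\<Sum>x\<in>X. g x / sum g X)"
    using f0 g Sg by (intro sum.cong) auto
  also have "\<dots> = 1" using Sg by (simp add: sum_divide_distrib[symmetric])
  finally have 1: "(\<Sum>x\<in>X. \<bar>f x / sum f X - g x / sum g X\<bar>) = 1" .
  have "(\<Sum>x\<in>X. \<bar>f x - g x\<bar>) = sum g X" using f0 g by (intro sum.cong) auto
  thus ?thesis using Sg 1 by simp
next
  case False
  have Sf: "sum f X > 0" using False sum_nonneg[of X f] f by fastforce
  have "(\<Sum>x\<in>X. \<bar>f x / sum f X - g x / sum g X\<bar>)
     \<le> (\<Sum>x\<in>X. \<bar>f x / sum f X - f x / sum g X\<bar> + \<bar>f x - g x\<bar> / sum g X)"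
  proof (intro sum_mono)
    fix x assume "x \<in> X"
    have "\<bar>f x / sum f X - g x / sum g X\<bar> \<le> \<bar>f x / sum f X - f x / sum g X\<bar> + \<bar>f x / sum g X - g x / sum g X\<bar>"
      by linarith
    also have "\<bar>f x / sum g X - g x / sum g X\<bar> = \<bar>f x - g x\<bar> / sum g X"
      using Sg by (simp add: diff_divide_distrib[symmetric])
    finally show "\<bar>f x / sum f X - g x / sum g X\<bar> \<le> \<bar>f x / sum f X - f x / sum g X\<bar> + \<bar>f x - g x\<bar> / sum g X" .
  qed
  also have "\<dots> = (\<Sum>x\<in>X. f x * \<bar>1 / sum f X - 1 / sum g X\<bar>) + (\<Sum>x\<in>X. \<bar>f x - g x\<bar>) / sum g X"
  proof -
    have "\<And>x. x \<in> X \<Longrightarrow> \<bar>f x / sum f X - f x / sum g X\<bar> = f x * \<bar>1 / sum f X - 1 / sum g X\<bar>"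
    proof -
      fix x assume x: "x \<in> X"
      have "f x / sum f X - f x / sum g X = f x * (1 / sum f X - 1 / sum g X)" by (simp add: algebra_simps)
      thus "?thesis x" using f[OF x] by (simp add: abs_mult)
    qed
    thus ?thesis by (simp add: sum.distrib sum_divide_distrib[symmetric])
  qed
  also have "(\<Sum>x\<in>X. f x * \<bar>1 / sum f X - 1 / sum g X\<bar>) = sum f X * \<bar>1 / sum f X - 1 / sum g X\<bar>"
    by (simp add: sum_distrib_right)
  also have "\<dots> = \<bar>sum g X - sum f X\<bar> / sum g X"
  proof -
    have "1 / sum f X - 1 / sum g X = (sum g X - sum f X) / (sum f X * sum g X)" using Sf Sg by (simp add: field_simps)
    hence "\<bar>1 / sum f X - 1 / sum g X\<bar> = \<bar>sum g X - sum f X\<bar> / (sum f X * sum g X)" using Sf Sg by simp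
    thus ?thesis using Sf by simp
  qed
  also have "\<bar>sum g X - sum f X\<bar> = \<bar>\<Sum>x\<in>X. g x - f x\<bar>" by (simp add: sum_subtractf)
  also have "\<dots> \<le> (\<Sum>x\<in>X. \<bar>f x - g x\<bar>)"
    by (rule order_trans[OF sum_abs]) (simp add: abs_minus_commute)
  finally have "(\<Sum>x\<in>X. \<bar>f x / sum f X - g x / sum g X\<bar>) \<le> (\<Sum>x\<in>X. \<bar>f x - g x\<bar>) / sum g X + (\<Sum>x\<in>X. \<bar>f x - g x\<bar>) / sum g X"
    using Sg by (simp add: divide_right_mono)
  thus ?thesis by simp
qed

lemma norm_scale:
  fixes f :: "'a \<Rightarrow> real"
  assumes "c \<noteq> 0"
  shows "(c * f x) / (\<Sum>y\<in>X. c * f y) = f x / sum f X"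
  using assms by (simp add: sum_distrib_left[symmetric])

lemma prod_diff_le:
  fixes u v :: "'a \<Rightarrow> real"
  assumes "finite I" "\<And>i. i \<in> I \<Longrightarrow> 0 \<le> u i \<and> u i \<le> 1" "\<And>i. i \<in> I \<Longrightarrow> 0 \<le> v i \<and> v i \<le> 1"
  shows "\<bar>(\<Prod>i\<in>I. u i) - (\<Prod>i\<in>I. v i)\<bar> \<le> (\<Sum>i\<in>I. \<bar>u i - v i\<bar>)"
  using assms
proof (induction I rule: finite_induct)
  case empty thus ?case by simp
next
  case (insert i I)
  let ?P = "\<Prod>j\<in>I. u j" and ?Q = "\<Prod>j\<in>I. v j"
  have P: "0 \<le> ?P" "?P \<le> 1" using insert.prems by (auto intro: prod_nonneg prod_le_1)
  have Q: "0 \<le> ?Q" "?Q \<le> 1" using insert.prems by (auto intro: prod_nonneg prod_le_1)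
  have ui: "0 \<le> u i" "u i \<le> 1" "0 \<le> v i" "v i \<le> 1" using insert.prems by auto
  have IH: "\<bar>?P - ?Q\<bar> \<le> (\<Sum>j\<in>I. \<bar>u j - v j\<bar>)" using insert.prems by (intro insert.IH) auto
  have "u i * ?P - v i * ?Q = u i * (?P - ?Q) + (u i - v i) * ?Q" by (simp add: algebra_simps)
  hence "\<bar>u i * ?P - v i * ?Q\<bar> \<le> \<bar>u i\<bar> * \<bar>?P - ?Q\<bar> + \<bar>u i - v i\<bar> * \<bar>?Q\<bar>"
    by (metis abs_mult abs_triangle_ineq)
  also have "\<dots> \<le> 1 * (\<Sum>j\<in>I. \<bar>u j - v j\<bar>) + \<bar>u i - v i\<bar> * 1"
    using ui Q IH by (intro add_mono mult_mono) auto
  finally show ?case using insert.hyps by simp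
qed

lemma tv_bound:
  fixes \<nu> \<pi> \<Phi> :: "'a \<Rightarrow> real"
  assumes "finite X" "\<And>x. x \<in> X \<Longrightarrow> \<bar>\<Phi> x\<bar> \<le> K"
  shows "\<bar>(\<Sum>x\<in>X. \<nu> x * \<Phi> x) - (\<Sum>x\<in>X. \<pi> x * \<Phi> x)\<bar> \<le> (\<Sum>x\<in>X. \<bar>\<nu> x - \<pi> x\<bar>) * K"
proof -
  have "\<bar>(\<Sum>x\<in>X. \<nu> x * \<Phi> x) - (\<Sum>x\<in>X. \<pi> x * \<Phi> x)\<bar> = \<bar>\<Sum>x\<in>X. (\<nu> x - \<pi> x) * \<Phi> x\<bar>"
    by (simp add: sum_subtractf left_diff_distrib)
  also have "\<dots> \<le> (\<Sum>x\<in>X. \<bar>(\<nu> x - \<pi> x) * \<Phi> x\<bar>)" by (rule sum_abs)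
  also have "\<dots> \<le> (\<Sum>x\<in>X. \<bar>\<nu> x - \<pi> x\<bar> * K)"
    using assms by (intro sum_mono) (simp add: abs_mult mult_left_mono)
  finally show ?thesis by (simp add: sum_distrib_right)
qed

lemma sum_le_card_sup:
  fixes f :: "'a \<Rightarrow> real"
  assumes "finite X" "\<And>x. x \<in> X \<Longrightarrow> f x \<le> d"
  shows "sum f X \<le> real (card X) * d"
  using sum_mono[of X f "\<lambda>_. d"] assms by simp

lemma L1_triangle:
  fixes f g h :: "'a \<Rightarrow> real"
  shows "(\<Sum>x\<in>X. \<bar>f x - h x\<bar>) \<le> (\<Sum>x\<in>X. \<bar>f x - g x\<bar>) + (\<Sum>x\<in>X. \<bar>g x - h x\<bar>)"
  by (simp add: sum.distrib[symmetric] sum_mono abs_triangle_ineq4 order_trans[OF _ abs_triangle_ineq] )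




definition ws :: "('v,'f,'c) fg \<Rightarrow> 'f set \<Rightarrow> ('v \<Rightarrow> 'c) \<Rightarrow> real" where
  "ws G S \<rho> = (\<Prod>a\<in>S. psi G a (map \<rho> (nb G a)))"

lemma ws_empty[simp]: "ws G {} \<rho> = 1" by (simp add: ws_def)

lemma weight_del: "weight (del_facs G D) \<rho> = ws G (facs G - D) \<rho>"
  by (simp add: weight_def ws_def del_facs_def)

lemma del_facs_simps[simp]: "vars (del_facs G D) = vars G" "nb (del_facs G D) = nb G"
   "psi (del_facs G D) = psi G" "facs (del_facs G D) = facs G - D"
  by (simp_all add: del_facs_def)

lemma ws_union: "finite S \<Longrightarrow> finite T \<Longrightarrow> S \<inter> T = {} \<Longrightarrow> ws G (S \<union> T) \<rho> = ws G S \<rho> * ws G T \<rho>"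
  by (simp add: ws_def prod.union_disjoint)

lemma ws_insert: "finite S \<Longrightarrow> a \<notin> S \<Longrightarrow> ws G (insert a S) \<rho> = psi G a (map \<rho> (nb G a)) * ws G S \<rho>"
  by (simp add: ws_def)

lemma ws_cong: "(\<And>a v. a \<in> S \<Longrightarrow> v \<in> set (nb G a) \<Longrightarrow> \<rho> v = \<rho>' v) \<Longrightarrow> ws G S \<rho> = ws G S \<rho>'"
  unfolding ws_def by (intro prod.cong refl arg_cong[where f="psi G _"]) auto

lemma marg_ratio: "marg H W \<tau>0 = (\<Sum>\<rho>\<in>configs (vars H). if restrict \<rho> W = \<tau>0 then weight H \<rho> else 0) / (\<Sum>\<rho>\<in>configs (vars H). weight H \<rho>)"
  unfolding marg_def gibbs_def by (simp add: sum_divide_distrib) (intro sum.cong refl, auto)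

lemma marg1_ratio: "marg1 H z c = (\<Sum>\<rho>\<in>configs (vars H). if \<rho> z = c then weight H \<rho> else 0) / (\<Sum>\<rho>\<in>configs (vars H). weight H \<rho>)"
  unfolding marg1_def gibbs_def by (simp add: sum_divide_distrib) (intro sum.cong refl, auto)

lemma sum_if_eq_total:
  fixes w :: "_ \<Rightarrow> real"
  assumes "finite S"
  shows "(\<Sum>c\<in>(UNIV::'c::finite set). \<Sum>\<rho>\<in>S. if \<rho> z = c then w \<rho> else 0) = (\<Sum>\<rho>\<in>S. w \<rho>)"
  by (subst sum.swap) (simp add: sum.delta)

lemma marg1_ratio2: "finite (vars H) \<Longrightarrow> marg1 H z c = (\<Sum>\<rho>\<in>configs (vars H). if \<rho> z = c then weight H \<rho> else 0) /
   (\<Sum>c'\<in>UNIV. \<Sum>\<rho>\<in>configs (vars H). if \<rho> z = c' then weight H \<rho> else (0::real))"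
  for H :: "('v,'f,'c::finite) fg"
  by (simp add: marg1_ratio sum_if_eq_total)

locale cav =
  fixes G :: "('v,'f,'c::finite) fg" and U :: "'v set"
  assumes wf: "fg_wf G" and cav: "cavity G U"
begin

definition "FU = {a\<in>facs G. set (nb G a) \<subseteq> U}"
definition "FO = {a\<in>facs G. set (nb G a) \<inter> U = {} \<and> set (nb G a) \<noteq> {}}"
definition "OV = vars G - U"
abbreviation "B \<equiv> bdry G U"
abbreviation "Y \<equiv> dist2 G U"
definition "ZO = (\<Sum>\<tau>\<in>configs OV. ws G FO \<tau>)"
abbreviation "G' \<equiv> del_facs G B"
definition "nu = marg G' Y"
definition "p = marg1 G'"
definition "piY = pr Y p"

lemma finV: "finite (vars G)" and finF: "finite (facs G)"
  and nbV: "a \<in> facs G \<Longrightarrow> set (nb G a) \<subseteq> vars G"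
  and psi_pos: "a \<in> facs G \<Longrightarrow> length \<tau> = length (nb G a) \<Longrightarrow> psi G a \<tau> > 0"
  using wf unfolding fg_wf_def by auto

lemma cav2: "\<forall>a\<in>facs G. \<not> set (nb G a) \<subseteq> U \<longrightarrow> card (set (nb G a) \<inter> U) \<le> 1"
  and cav3: "\<forall>a\<in>facs G. \<forall>b\<in>facs G. a \<noteq> b \<and> set (nb G a) \<inter> U \<noteq> {} \<and> set (nb G b) \<inter> U \<noteq> {}
         \<longrightarrow> (set (nb G a) \<inter> set (nb G b)) - U = {}"
  and UV: "U \<subseteq> vars G" and Une: "U \<noteq> {}"
  using cav[unfolded cavity_def, THEN conjunct2, THEN conjunct2, THEN conjunct2, THEN conjunct1]
   cav[unfolded cavity_def, THEN conjunct2, THEN conjunct2, THEN conjunct2, THEN conjunct2]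
   cav[unfolded cavity_def, THEN conjunct2, THEN conjunct1]
   cav[unfolded cavity_def, THEN conjunct1] by blast+
lemma finU: "finite U" using UV finV finite_subset by auto
lemma finOO: "finite OV" using finV by (simp add: OV_def)
lemma YOO: "Y \<subseteq> OV" by (auto simp: dist2_def OV_def)
lemma finY: "finite Y" using YOO finOO finite_subset by auto
lemma YU: "Y \<inter> U = {}" using YOO by (auto simp: OV_def)
lemma VUO: "vars G = U \<union> OV" "U \<inter> OV = {}" using UV by (auto simp: OV_def)
lemma B_facs: "B \<subseteq> facs G" by (auto simp: bdry_def)

lemma facs_split: "facs G = FU \<union> FO \<union> B" "FU \<inter> FO = {}" "FU \<inter> B = {}" "FO \<inter> B = {}"
  unfolding FU_def FO_def bdry_def by (auto simp: disjoint_iff subset_iff)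

lemma B_nbY: "a \<in> B \<Longrightarrow> set (nb G a) - U \<subseteq> Y"
  using nbV by (auto simp: bdry_def dist2_def)

lemma B_card: "a \<in> B \<Longrightarrow> card (set (nb G a) \<inter> U) \<le> 1"
proof -
  assume a: "a \<in> B"
  note cav2
  thus ?thesis using a unfolding bdry_def by blast
qed

lemma B_xto: assumes "a \<in> B" shows "set (nb G a) \<inter> U = {xto G a U}"
proof -
  obtain x where x: "x \<in> set (nb G a) \<inter> U" using assms unfolding bdry_def by blast
  have c: "card (set (nb G a) \<inter> U) \<le> 1" using B_card[OF assms] .
  have fin: "finite (set (nb G a) \<inter> U)" by simp
  have "card (set (nb G a) \<inter> U) \<le> Suc 0" using c by simp
  hence all: "\<forall>u\<in>set (nb G a) \<inter> U. \<forall>v\<in>set (nb G a) \<inter> U. u = v"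
    using card_le_Suc0_iff_eq[OF fin] by blast
  hence one: "\<And>y. y \<in> set (nb G a) \<inter> U \<Longrightarrow> y = x" using x by blast
  have "xto G a U = x" unfolding xto_def
    by (rule the_equality) (use x one in blast)+
  thus ?thesis using x one by blast
qed

lemma B_disj: "a \<in> B \<Longrightarrow> b \<in> B \<Longrightarrow> a \<noteq> b \<Longrightarrow> (set (nb G a) - U) \<inter> (set (nb G b) - U) = {}"
proof -
  assume a: "a \<in> B" "b \<in> B" "a \<noteq> b"
  note cav3
  hence "(set (nb G a) \<inter> set (nb G b)) - U = {}" using a unfolding bdry_def by blast
  thus ?thesis by blast
qed

lemma ws_pos: "S \<subseteq> facs G \<Longrightarrow> ws G S \<rho> > 0"
  unfolding ws_def by (intro prod_pos psi_pos) auto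

lemma finFU: "finite FU" and finFO: "finite FO" and finB: "finite B"
  using finF by (auto simp: FU_def FO_def bdry_def)

lemma dec:
  assumes D: "D \<inter> FO = {}"
  shows "(\<Sum>\<rho>\<in>configs (vars G). weight (del_facs G D) \<rho> * \<chi> \<rho>) =
    (\<Sum>\<sigma>\<in>configs U. \<Sum>\<tau>\<in>configs OV. ws G (FU - D) \<sigma> * ws G FO \<tau> * ws G (B - D) (mrg U \<sigma> \<tau>) * \<chi> (mrg U \<sigma> \<tau>))"
proof -
  have fd: "facs G - D = (FU - D) \<union> FO \<union> (B - D)" using facs_split D by auto
  have w: "weight (del_facs G D) \<rho> = ws G (FU - D) \<rho> * ws G FO \<rho> * ws G (B - D) \<rho>" for \<rho>
  proof -
    have "ws G ((FU - D) \<union> FO \<union> (B - D)) \<rho> = ws G ((FU - D) \<union> FO) \<rho> * ws G (B - D) \<rho>"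
      using finFU finFO finB facs_split by (intro ws_union) auto
    also have "ws G ((FU - D) \<union> FO) \<rho> = ws G (FU - D) \<rho> * ws G FO \<rho>"
      using finFU finFO finB facs_split by (intro ws_union) auto
    finally show ?thesis unfolding weight_del fd .
  qed
  have a: "ws G (FU - D) (mrg U \<sigma> \<tau>) = ws G (FU - D) \<sigma>" for \<sigma> \<tau>
    by (rule ws_cong) (auto simp: mrg_def FU_def)
  have b: "ws G FO (mrg U \<sigma> \<tau>) = ws G FO \<tau>" for \<sigma> \<tau>
    by (rule ws_cong) (auto simp: mrg_def FO_def)
  show ?thesis
    unfolding del_facs_simps VUO(1) using finU finOO VUO(2)
    by (simp only: split_sum w a b)
qed

lemma sumFU_pos: "(\<Sum>\<sigma>\<in>configs U. ws G S \<sigma>) > 0" if "S \<subseteq> facs G"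
  using that finU by (intro sum_pos ws_pos configs_nonempty) (auto simp: configs_nonempty)

lemma ZO_pos: "ZO > 0"
  unfolding ZO_def using finOO
  by (intro sum_pos ws_pos) (auto simp: configs_nonempty FO_def)

end



context cav begin

lemma restrict_mrg_Y: "restrict (mrg U \<sigma> \<tau>) Y = restrict \<tau> Y"
  using YU by (auto simp: restrict_def mrg_def fun_eq_iff)

lemma sum_times_ind:
  fixes w :: "_ \<Rightarrow> real"
  shows "(\<Sum>\<rho>\<in>S. if P \<rho> then w \<rho> else 0) = (\<Sum>\<rho>\<in>S. w \<rho> * (if P \<rho> then 1 else 0))"
  by (intro sum.cong) auto

lemma nu_eq:
  "nu \<tau>0 = (\<Sum>\<tau>\<in>configs OV. ws G FO \<tau> * (if restrict \<tau> Y = \<tau>0 then 1 else 0)) / ZO"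
proof -
  have BF: "B \<inter> FO = {}" using facs_split by auto
  have FUB: "FU - B = FU" using facs_split by auto
  have num: "(\<Sum>\<rho>\<in>configs (vars G'). if restrict \<rho> Y = \<tau>0 then weight G' \<rho> else 0)
     = (\<Sum>\<sigma>\<in>configs U. ws G FU \<sigma>) * (\<Sum>\<tau>\<in>configs OV. ws G FO \<tau> * (if restrict \<tau> Y = \<tau>0 then 1 else 0))"
    unfolding del_facs_simps sum_times_ind dec[OF BF] FUB restrict_mrg_Y
    by (simp add: sum_product mult_ac)
  have den: "(\<Sum>\<rho>\<in>configs (vars G'). weight G' \<rho>) = (\<Sum>\<sigma>\<in>configs U. ws G FU \<sigma>) * ZO"
    using dec[OF BF, of "\<lambda>_. 1"] unfolding del_facs_simps FUB ZO_def
    by (simp add: sum_product mult_ac)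
  have pos: "(\<Sum>\<sigma>\<in>configs U. ws G FU \<sigma>) > 0" using sumFU_pos[of FU] facs_split by auto
  show ?thesis unfolding nu_def marg_ratio num den using pos by simp
qed

lemma EO:
  assumes "loc Y \<Phi>"
  shows "(\<Sum>\<tau>\<in>configs OV. ws G FO \<tau> * \<Phi> \<tau>) = ZO * (\<Sum>\<tau>\<in>configs Y. nu \<tau> * \<Phi> \<tau>)"
proof -
  have "(\<Sum>\<tau>\<in>configs Y. nu \<tau> * \<Phi> \<tau>) =
     (\<Sum>\<tau>\<in>configs Y. (\<Sum>\<rho>\<in>configs OV. if restrict \<rho> Y = \<tau> then ws G FO \<rho> / ZO else 0) * \<Phi> \<tau>)"
    unfolding nu_eq by (intro sum.cong refl arg_cong2[where f="(*)"]) (simp add: sum_divide_distrib, intro sum.cong, auto)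
  also have "\<dots> = (\<Sum>\<rho>\<in>configs OV. ws G FO \<rho> / ZO * \<Phi> (restrict \<rho> Y))"
    using finY finOO by (intro fiber_sum) auto
  also have "\<dots> = (\<Sum>\<rho>\<in>configs OV. ws G FO \<rho> * \<Phi> \<rho>) / ZO"
    using loc_restrict[OF assms] by (simp add: sum_divide_distrib)
  finally show ?thesis using ZO_pos by simp
qed

lemma nu_nonneg: "nu \<tau> \<ge> 0"
  unfolding nu_eq using ZO_pos ws_pos[of FO] by (intro divide_nonneg_pos sum_nonneg) (auto simp: FO_def less_imp_le)

lemma nu_sum: "(\<Sum>\<tau>\<in>configs Y. nu \<tau>) = 1"
  using EO[of "\<lambda>_. 1"] ZO_pos unfolding ZO_def by (simp add: loc_def)

lemma loc_Bws:
  assumes "S \<subseteq> B"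
  shows "loc Y (\<lambda>\<tau>. ws G S (mrg U \<sigma> \<tau>))"
  unfolding loc_def
proof (intro allI impI ws_cong)
  fix \<rho> \<rho>' :: "'v \<Rightarrow> 'c" and a v assume h: "\<forall>y\<in>Y. \<rho> y = \<rho>' y" and a: "a \<in> S" and v: "v \<in> set (nb G a)"
  show "mrg U \<sigma> \<rho> v = mrg U \<sigma> \<rho>' v"
  proof (cases "v \<in> U")
    case False
    hence "v \<in> Y" using B_nbY[of a] a assms v by auto
    thus ?thesis using h False by (simp add: mrg_def)
  qed (simp add: mrg_def)
qed

lemma master:
  assumes D: "D \<subseteq> facs G" "D \<inter> FO = {}" and l: "loc Y \<chi>2"
  shows "(\<Sum>\<rho>\<in>configs (vars G). weight (del_facs G D) \<rho> * (\<chi>1 (restrict \<rho> U) * \<chi>2 \<rho>)) =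
    ZO * (\<Sum>\<sigma>\<in>configs U. ws G (FU - D) \<sigma> * \<chi>1 \<sigma> * (\<Sum>\<tau>\<in>configs Y. nu \<tau> * (ws G (B - D) (mrg U \<sigma> \<tau>) * \<chi>2 \<tau>)))"
proof -
  have r: "restrict (mrg U \<sigma> \<tau>) U = \<sigma>" if "\<sigma> \<in> configs U" for \<sigma> \<tau>
    using that by (auto simp: restrict_def mrg_def configs_mem fun_eq_iff)
  have c2: "\<chi>2 (mrg U \<sigma> \<tau>) = \<chi>2 \<tau>" for \<sigma> \<tau>
    by (rule locD[OF l]) (use YU in \<open>auto simp: mrg_def\<close>)
  have lP: "loc Y (\<lambda>\<tau>. ws G (B - D) (mrg U \<sigma> \<tau>) * \<chi>2 \<tau>)" for \<sigma>
    using loc_Bws[of "B - D" \<sigma>] l unfolding loc_def by (metis (no_types, lifting) Diff_subset)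
  have "(\<Sum>\<rho>\<in>configs (vars G). weight (del_facs G D) \<rho> * (\<chi>1 (restrict \<rho> U) * \<chi>2 \<rho>)) =
     (\<Sum>\<sigma>\<in>configs U. \<Sum>\<tau>\<in>configs OV. ws G (FU - D) \<sigma> * ws G FO \<tau> * ws G (B - D) (mrg U \<sigma> \<tau>) * (\<chi>1 \<sigma> * \<chi>2 \<tau>))"
    unfolding dec[OF D(2)] by (intro sum.cong refl) (simp add: r c2)
  also have "\<dots> = (\<Sum>\<sigma>\<in>configs U. ws G (FU - D) \<sigma> * \<chi>1 \<sigma> * (\<Sum>\<tau>\<in>configs OV. ws G FO \<tau> * (ws G (B - D) (mrg U \<sigma> \<tau>) * \<chi>2 \<tau>)))"
    by (intro sum.cong refl) (simp add: sum_distrib_left mult_ac)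
  also have "\<dots> = (\<Sum>\<sigma>\<in>configs U. ws G (FU - D) \<sigma> * \<chi>1 \<sigma> * (ZO * (\<Sum>\<tau>\<in>configs Y. nu \<tau> * (ws G (B - D) (mrg U \<sigma> \<tau>) * \<chi>2 \<tau>))))"
    by (intro sum.cong refl) (simp add: EO[OF lP])
  finally show ?thesis by (simp add: sum_distrib_left mult_ac)
qed

end



lemma del_facs_empty[simp]: "del_facs G {} = G" by (simp add: del_facs_def)

lemma sum_weight_pos: "fg_wf H \<Longrightarrow> (\<Sum>\<rho>\<in>configs (vars H). weight H \<rho>) > 0"
  for H :: "('v,'f,'c::finite) fg"
  unfolding fg_wf_def weight_def
  by (intro sum_pos prod_pos) (auto simp: configs_nonempty)

lemma wf_del: "fg_wf G \<Longrightarrow> fg_wf (del_facs G D)"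
  by (auto simp: fg_wf_def)

lemma marg1_sum: "fg_wf H \<Longrightarrow> (\<Sum>c\<in>UNIV. marg1 H z c) = 1"
  for H :: "('v,'f,'c::finite) fg"
proof -
  assume w: "fg_wf H"
  have f: "finite (vars H)" using w by (simp add: fg_wf_def)
  show ?thesis unfolding marg1_ratio sum_divide_distrib[symmetric]
    using sum_if_eq_total[of "configs (vars H)" z "weight H"] f sum_weight_pos[OF w] by simp
qed

lemma marg1_nonneg: "fg_wf H \<Longrightarrow> marg1 H z c \<ge> 0"
  for H :: "('v,'f,'c::finite) fg"
proof -
  assume w: "fg_wf H"
  have "\<And>\<rho>. weight H \<rho> \<ge> 0" using w unfolding fg_wf_def weight_def
    by (intro prod_nonneg) (auto intro: less_imp_le)
  thus ?thesis unfolding marg1_ratio using sum_weight_pos[OF w]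
    by (intro divide_nonneg_pos sum_nonneg) auto
qed

lemma marg1_le1: "fg_wf H \<Longrightarrow> marg1 H z c \<le> 1"
  for H :: "('v,'f,'c::finite) fg"
proof -
  assume w: "fg_wf H"
  have "marg1 H z c \<le> (\<Sum>c\<in>UNIV. marg1 H z c)"
    using marg1_nonneg[OF w] by (intro member_le_sum) auto
  thus ?thesis using marg1_sum[OF w] by simp
qed

definition cs :: "'v set \<Rightarrow> 'c \<Rightarrow> 'v \<Rightarrow> 'c" where "cs U s = restrict (\<lambda>_. s) U"

lemma cs_configs[simp]: "cs U s \<in> configs U" by (simp add: cs_def)

context cav begin

lemma wfG': "fg_wf G'" using wf_del[OF wf] .

lemma p_sum: "(\<Sum>c\<in>UNIV. p y c) = 1" unfolding p_def using marg1_sum[OF wfG'] .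
lemma p_nonneg: "p y c \<ge> 0" unfolding p_def using marg1_nonneg[OF wfG'] .
lemma p_le1: "p y c \<le> 1" unfolding p_def using marg1_le1[OF wfG'] .

lemma piY_nonneg: "piY \<tau> \<ge> 0" unfolding piY_def pr_def using p_nonneg by (intro prod_nonneg) auto
lemma piY_sum: "(\<Sum>\<tau>\<in>configs Y. piY \<tau>) = 1" unfolding piY_def using finY p_sum by (intro sum_pr1) auto

definition "tv = tv_prod G' Y"

lemma tv_eq: "(\<Sum>\<tau>\<in>configs Y. \<bar>nu \<tau> - piY \<tau>\<bar>) = 2 * tv"
  unfolding tv_def tv_prod_def nu_def piY_def pr_def p_def by simp

lemma approx:
  assumes "\<And>\<tau>. \<tau> \<in> configs Y \<Longrightarrow> \<bar>\<Phi> \<tau>\<bar> \<le> K"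
  shows "\<bar>(\<Sum>\<tau>\<in>configs Y. nu \<tau> * \<Phi> \<tau>) - (\<Sum>\<tau>\<in>configs Y. piY \<tau> * \<Phi> \<tau>)\<bar> \<le> 2 * tv * K"
  using tv_bound[of "configs Y" \<Phi> K nu piY] assms finY tv_eq by simp

lemma E_bounds:
  fixes w :: "_ \<Rightarrow> real"
  assumes "\<And>\<tau>. \<tau> \<in> configs Y \<Longrightarrow> a \<le> \<Phi> \<tau> \<and> \<Phi> \<tau> \<le> b" and "\<And>\<tau>. w \<tau> \<ge> 0" and "(\<Sum>\<tau>\<in>configs Y. w \<tau>) = 1"
  shows "a \<le> (\<Sum>\<tau>\<in>configs Y. w \<tau> * \<Phi> \<tau>)" "(\<Sum>\<tau>\<in>configs Y. w \<tau> * \<Phi> \<tau>) \<le> b"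
proof -
  have "(\<Sum>\<tau>\<in>configs Y. w \<tau> * a) \<le> (\<Sum>\<tau>\<in>configs Y. w \<tau> * \<Phi> \<tau>)"
    using assms by (intro sum_mono mult_left_mono) auto
  thus "a \<le> (\<Sum>\<tau>\<in>configs Y. w \<tau> * \<Phi> \<tau>)" using assms(3) by (simp add: sum_distrib_right[symmetric])
  have "(\<Sum>\<tau>\<in>configs Y. w \<tau> * \<Phi> \<tau>) \<le> (\<Sum>\<tau>\<in>configs Y. w \<tau> * b)"
    using assms by (intro sum_mono mult_left_mono) auto
  thus "(\<Sum>\<tau>\<in>configs Y. w \<tau> * \<Phi> \<tau>) \<le> b" using assms(3) by (simp add: sum_distrib_right[symmetric])
qed

definition "Pa a \<sigma> \<tau> = psi G a (map (mrg U \<sigma> \<tau>) (nb G a))"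
definition "e a \<sigma> = (\<Sum>\<tau>\<in>configs Y. piY \<tau> * Pa a \<sigma> \<tau>)"
definition "es a s = e a (cs U s)"

lemma ws_Pa: "ws G S (mrg U \<sigma> \<tau>) = (\<Prod>a\<in>S. Pa a \<sigma> \<tau>)"
  unfolding ws_def Pa_def ..

lemma psi_cong: "(\<And>v. v \<in> set (nb G a) \<Longrightarrow> f v = g v) \<Longrightarrow> psi G a (map f (nb G a)) = psi G a (map g (nb G a))"
proof -
  assume "\<And>v. v \<in> set (nb G a) \<Longrightarrow> f v = g v"
  hence "map f (nb G a) = map g (nb G a)" by simp
  thus ?thesis by (rule arg_cong)
qed

lemma Pa_loc: "loc (set (nb G a) - U) (Pa a \<sigma>)"
  unfolding loc_def Pa_def by (intro allI impI psi_cong) (simp add: mrg_def)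

lemma Pa_sig: assumes "a \<in> B" "\<sigma> (xto G a U) = \<sigma>' (xto G a U)" shows "Pa a \<sigma> \<tau> = Pa a \<sigma>' \<tau>"
  unfolding Pa_def
proof (rule psi_cong)
  fix v assume v: "v \<in> set (nb G a)"
  show "mrg U \<sigma> \<tau> v = mrg U \<sigma>' \<tau> v"
  proof (cases "v \<in> U")
    case True
    hence "v = xto G a U" using B_xto[OF assms(1)] v by blast
    thus ?thesis using assms(2) True by (simp add: mrg_def)
  qed (simp add: mrg_def)
qed

lemma e_sig: "a \<in> B \<Longrightarrow> \<sigma> (xto G a U) = \<sigma>' (xto G a U) \<Longrightarrow> e a \<sigma> = e a \<sigma>'"
  unfolding e_def by (intro sum.cong refl arg_cong2[where f="(*)"] Pa_sig)

lemma xto_U: "a \<in> B \<Longrightarrow> xto G a U \<in> U" using B_xto by blast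

lemma e_es: "a \<in> B \<Longrightarrow> e a \<sigma> = es a (\<sigma> (xto G a U))"
  unfolding es_def by (rule e_sig) (auto simp: cs_def xto_U)

lemma E_prod: "S \<subseteq> B \<Longrightarrow> (\<Sum>\<tau>\<in>configs Y. piY \<tau> * ws G S (mrg U \<sigma> \<tau>)) = (\<Prod>a\<in>S. e a \<sigma>)"
  unfolding ws_Pa e_def piY_def
proof (rule pr_factor_prod[OF finY p_sum, where A="\<lambda>a. set (nb G a) - U"])
  assume S: "S \<subseteq> B"
  show "finite S" using S finB finite_subset by auto
  show "\<And>i. i \<in> S \<Longrightarrow> set (nb G i) - U \<subseteq> Y" using S B_nbY by auto
  show "\<And>i j. i \<in> S \<Longrightarrow> j \<in> S \<Longrightarrow> i \<noteq> j \<Longrightarrow> (set (nb G i) - U) \<inter> (set (nb G j) - U) = {}"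
    using S B_disj by auto
  show "\<And>i. i \<in> S \<Longrightarrow> loc (set (nb G i) - U) (Pa i \<sigma>)" using Pa_loc by auto
qed

lemma E_factor: assumes "a \<in> B" "S \<subseteq> B - {a}" "loc (Y - (set (nb G a) - U)) \<chi>"
  shows "(\<Sum>\<tau>\<in>configs Y. piY \<tau> * (Pa a \<sigma> \<tau> * (ws G S (mrg U \<sigma> \<tau>) * \<chi> \<tau>)))
     = e a \<sigma> * (\<Sum>\<tau>\<in>configs Y. piY \<tau> * (ws G S (mrg U \<sigma> \<tau>) * \<chi> \<tau>))"
proof -
  have l: "loc (Y - (set (nb G a) - U)) (\<lambda>\<tau>. ws G S (mrg U \<sigma> \<tau>) * \<chi> \<tau>)"
    unfolding loc_def
  proof (intro allI impI)
    fix \<rho> \<rho>' :: "'v \<Rightarrow> 'c" assume h: "\<forall>y\<in>Y - (set (nb G a) - U). \<rho> y = \<rho>' y"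
    have "ws G S (mrg U \<sigma> \<rho>) = ws G S (mrg U \<sigma> \<rho>')"
    proof (rule ws_cong)
      fix b v assume b: "b \<in> S" and v: "v \<in> set (nb G b)"
      show "mrg U \<sigma> \<rho> v = mrg U \<sigma> \<rho>' v"
      proof (cases "v \<in> U")
        case False
        have bB: "b \<in> B" "b \<noteq> a" using b assms by auto
        have "v \<in> Y" using B_nbY[OF bB(1)] v False by auto
        moreover have "v \<notin> set (nb G a) - U" using B_disj[OF assms(1) bB(1)] bB v False by auto
        ultimately show ?thesis using h False by (simp add: mrg_def)
      qed (simp add: mrg_def)
    qed
    moreover have "\<chi> \<rho> = \<chi> \<rho>'" using locD[OF assms(3)] h by blast
    ultimately show "ws G S (mrg U \<sigma> \<rho>) * \<chi> \<rho> = ws G S (mrg U \<sigma> \<rho>') * \<chi> \<rho>'" by simp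
  qed
  show ?thesis unfolding e_def piY_def
    by (rule pr_factor2[OF finY B_nbY[OF assms(1)] p_sum Pa_loc l])
qed

end

locale cavb = cav G U for G :: "('v,'f,'c::finite) fg" and U +
  fixes m M :: real and r :: nat
  assumes m_pos: "0 < m" and m_le1: "m \<le> 1" and M_ge1: "1 \<le> M"
    and bnd: "\<And>a \<rho>. a \<in> facs G \<Longrightarrow> set (nb G a) \<inter> U \<noteq> {} \<Longrightarrow> m \<le> psi G a (map \<rho> (nb G a)) \<and> psi G a (map \<rho> (nb G a)) \<le> M"
    and rB: "card B \<le> r"
begin

lemma Pa_bnd: "a \<in> B \<Longrightarrow> m \<le> Pa a \<sigma> \<tau> \<and> Pa a \<sigma> \<tau> \<le> M"
  unfolding Pa_def using bnd B_facs by (auto simp: bdry_def)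

lemma e_bnd: "a \<in> B \<Longrightarrow> m \<le> e a \<sigma> \<and> e a \<sigma> \<le> M"
  unfolding e_def using E_bounds[of m "Pa a \<sigma>" M piY] Pa_bnd piY_nonneg piY_sum by auto

lemma es_bnd: "a \<in> B \<Longrightarrow> m \<le> es a s \<and> es a s \<le> M"
  unfolding es_def using e_bnd by auto

lemma ws_B_bnd: "S \<subseteq> B \<Longrightarrow> m ^ r \<le> ws G S (mrg U \<sigma> \<tau>) \<and> ws G S (mrg U \<sigma> \<tau>) \<le> M ^ r"
proof -
  assume S: "S \<subseteq> B"
  have cS: "card S \<le> r" using rB card_mono[OF finB S] by simp
  have "m ^ card S \<le> (\<Prod>a\<in>S. Pa a \<sigma> \<tau>)"
    using prod_mono[of S "\<lambda>_. m" "\<lambda>a. Pa a \<sigma> \<tau>"] Pa_bnd S m_pos by (auto simp: less_imp_le)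
  moreover have "m ^ r \<le> m ^ card S" using power_decreasing[OF cS, of m] m_pos m_le1 by simp
  moreover have "(\<Prod>a\<in>S. Pa a \<sigma> \<tau>) \<le> M ^ card S"
  proof -
    have "\<And>i. i \<in> S \<Longrightarrow> 0 \<le> Pa i \<sigma> \<tau> \<and> Pa i \<sigma> \<tau> \<le> M"
      using Pa_bnd S m_pos by (meson dual_order.trans less_imp_le subsetD)
    thus ?thesis using prod_mono[of S "\<lambda>a. Pa a \<sigma> \<tau>" "\<lambda>_. M"] by simp
  qed
  moreover have "M ^ card S \<le> M ^ r" using power_increasing[OF cS, of M] M_ge1 by simp
  ultimately show ?thesis unfolding ws_Pa by linarith
qed

end



lemma sum_upd_invariant:
  fixes F :: "('v \<Rightarrow> 'c) \<Rightarrow> real" and s s' :: 'c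
  assumes fin: "finite (configs U :: ('v \<Rightarrow> 'c) set)" and x: "x \<in> U" and inv: "\<And>\<sigma> t. \<sigma> \<in> configs U \<Longrightarrow> F (\<sigma>(x := t)) = F \<sigma>"
  shows "(\<Sum>\<sigma>\<in>configs U. F \<sigma> * (if \<sigma> x = s then 1 else 0)) = (\<Sum>\<sigma>\<in>configs U. F \<sigma> * (if \<sigma> x = s' then 1 else 0))"
proof -
  have "(\<Sum>\<sigma>\<in>configs U. F \<sigma> * (if \<sigma> x = s then 1 else 0)) = (\<Sum>\<sigma>\<in>configs U. if \<sigma> x = s then F \<sigma> else 0)"
    by (intro sum.cong) auto
  also have "\<dots> = (\<Sum>\<sigma>\<in>{\<sigma>\<in>configs U. \<sigma> x = s}. F \<sigma>)"
    by (rule sum.inter_filter[OF fin, where P="\<lambda>\<sigma>::'v\<Rightarrow>'c. \<sigma> x = s", symmetric])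
  also have "\<dots> = (\<Sum>\<sigma>\<in>{\<sigma>\<in>configs U. \<sigma> x = s'}. F \<sigma>)"
  proof (rule sum.reindex_bij_witness[of _ "\<lambda>\<sigma>. \<sigma>(x := s)" "\<lambda>\<sigma>. \<sigma>(x := s')"])
    fix \<sigma> assume "\<sigma> \<in> {\<sigma>\<in>configs U. \<sigma> x = s}"
    thus "(\<sigma>(x := s'))(x := s) = \<sigma>" "\<sigma>(x := s') \<in> {\<sigma>\<in>configs U. \<sigma> x = s'}" "F (\<sigma>(x := s')) = F \<sigma>"
      using x inv by (auto simp: configs_mem fun_eq_iff)
  next
    fix \<sigma> assume "\<sigma> \<in> {\<sigma>\<in>configs U. \<sigma> x = s'}"
    thus "(\<sigma>(x := s))(x := s') = \<sigma>" "\<sigma>(x := s) \<in> {\<sigma>\<in>configs U. \<sigma> x = s}"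
      using x by (auto simp: configs_mem fun_eq_iff)
  qed
  also have "\<dots> = (\<Sum>\<sigma>\<in>configs U. if \<sigma> x = s' then F \<sigma> else 0)"
    by (rule sum.inter_filter[OF fin, where P="\<lambda>\<sigma>::'v\<Rightarrow>'c. \<sigma> x = s'"])
  also have "\<dots> = (\<Sum>\<sigma>\<in>configs U. F \<sigma> * (if \<sigma> x = s' then 1 else 0))"
    by (intro sum.cong) auto
  finally show ?thesis .
qed

lemma weight_nn: "fg_wf H \<Longrightarrow> weight H \<rho> \<ge> 0"
  unfolding fg_wf_def weight_def by (intro prod_nonneg) (auto intro: less_imp_le)

context cavb begin

lemma finCU: "finite (configs U :: ('v \<Rightarrow> 'c) set)" using finU by simp
lemma wsFUD_pos: "ws G (FU - D) \<sigma> > 0" by (rule ws_pos) (auto simp: FU_def)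
lemma wsFUD_nn: "ws G (FU - D) \<sigma> \<ge> 0" using wsFUD_pos less_imp_le by blast

lemma restrict_U_at: "x \<in> U \<Longrightarrow> restrict \<rho> U x = \<rho> x" by simp

lemma msg_unnorm:
  assumes D: "D \<subseteq> facs G" "D \<inter> FO = {}" and x: "x \<in> U"
  shows "(\<Sum>\<rho>\<in>configs (vars G). if \<rho> x = s then weight (del_facs G D) \<rho> else 0) =
    ZO * (\<Sum>\<sigma>\<in>configs U. ws G (FU - D) \<sigma> * (if \<sigma> x = s then 1 else 0) * (\<Sum>\<tau>\<in>configs Y. nu \<tau> * (ws G (B - D) (mrg U \<sigma> \<tau>) * 1)))"
proof -
  have "(\<Sum>\<rho>\<in>configs (vars G). if \<rho> x = s then weight (del_facs G D) \<rho> else 0) =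
     (\<Sum>\<rho>\<in>configs (vars G). weight (del_facs G D) \<rho> * ((\<lambda>\<sigma>. if \<sigma> x = s then 1 else 0) (restrict \<rho> U) * (\<lambda>_. 1) \<rho>))"
    using x by (intro sum.cong) auto
  also have "\<dots> = ZO * (\<Sum>\<sigma>\<in>configs U. ws G (FU - D) \<sigma> * (if \<sigma> x = s then 1 else 0) * (\<Sum>\<tau>\<in>configs Y. nu \<tau> * (ws G (B - D) (mrg U \<sigma> \<tau>) * 1)))"
    by (rule master[OF D]) (simp add: loc_def)
  finally show ?thesis .
qed

definition "esn a s = es a s / (\<Sum>c\<in>UNIV. es a c)"

lemma es_sum_ge: "a \<in> B \<Longrightarrow> (\<Sum>c\<in>UNIV. es a c) \<ge> m"
proof -
  assume a: "a \<in> B"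
  obtain c0 :: 'c where True by blast
  have "es a c0 \<le> (\<Sum>c\<in>UNIV. es a c)" using es_bnd[OF a] m_pos
    by (intro member_le_sum) (auto intro: order_trans[OF less_imp_le])
  thus ?thesis using es_bnd[OF a, of c0] by linarith
qed

lemma es_sum_le: "a \<in> B \<Longrightarrow> (\<Sum>c\<in>UNIV. es a c) \<le> real (card (UNIV::'c set)) * M"
  using sum_le_card_sup[of "UNIV::'c set" "es a" M] es_bnd by auto

lemma esn_bnd: "a \<in> B \<Longrightarrow> m / (real (card (UNIV::'c set)) * M) \<le> esn a s \<and> esn a s \<le> 1"
proof -
  assume a: "a \<in> B"
  have S: "(\<Sum>c\<in>UNIV. es a c) > 0" using es_sum_ge[OF a] m_pos by linarith
  have "es a s \<le> (\<Sum>c\<in>UNIV. es a c)" using es_bnd[OF a] m_pos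
    by (intro member_le_sum) (auto intro: order_trans[OF less_imp_le])
  hence 1: "esn a s \<le> 1" unfolding esn_def using S by simp
  have "m / (real (card (UNIV::'c set)) * M) \<le> es a s / (real (card (UNIV::'c set)) * M)"
    using es_bnd[OF a] M_ge1 by (intro divide_right_mono) auto
  also have "\<dots> \<le> es a s / (\<Sum>c\<in>UNIV. es a c)"
    using es_bnd[OF a, of s] m_pos S es_sum_le[OF a] by (intro divide_left_mono) auto
  finally show ?thesis using 1 unfolding esn_def by simp
qed

lemma msg_approx:
  assumes a: "a \<in> B"
  shows "(\<Sum>s\<in>UNIV. \<bar>msg_fv G a (xto G a U) s - esn a s\<bar>) \<le> 4 * real (card (UNIV::'c set)) * tv * M ^ r / m ^ (r + 1)"
proof -
  define x where "x = xto G a U"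
  have x: "x \<in> U" unfolding x_def using xto_U[OF a] .
  define D where "D = dvar G x - {a}"
  define BB where "BB = B - dvar G x"
  have D: "D \<subseteq> facs G" "D \<inter> FO = {}" using x by (auto simp: D_def dvar_def FO_def)
  have aD: "a \<in> dvar G x" using B_xto[OF a] B_facs a by (auto simp: dvar_def x_def)
  have BD: "B - D = insert a BB" "a \<notin> BB" using a aD by (auto simp: D_def BB_def)
  have BBa: "BB \<subseteq> B - {a}" by (auto simp: BB_def aD)
  have finBB: "finite BB" using finB by (simp add: BB_def)
  define u where "u s = (\<Sum>\<rho>\<in>configs (vars G). if \<rho> x = s then weight (del_facs G D) \<rho> else 0)" for s
  define W where "W s = (\<Sum>\<sigma>\<in>configs U. ws G (FU - D) \<sigma> * (if \<sigma> x = s then 1 else 0))" for s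
  define EB where "EB \<sigma> = (\<Sum>\<tau>\<in>configs Y. piY \<tau> * ws G BB (mrg U \<sigma> \<tau>))" for \<sigma>
  define C where "C s = (\<Sum>\<sigma>\<in>configs U. ws G (FU - D) \<sigma> * EB \<sigma> * (if \<sigma> x = s then 1 else 0))" for s
  define v where "v s = ZO * C s * es a s" for s
  obtain s0 :: 'c where True by blast
  have wsinv: "ws G (FU - D) (\<sigma>(x := t)) = ws G (FU - D) \<sigma>" for \<sigma> t
  proof (rule ws_cong)
    fix b v assume b: "b \<in> FU - D" and v: "v \<in> set (nb G b)"
    have "x \<notin> set (nb G b)" using b facs_split(3) a by (auto simp: D_def dvar_def FU_def)
    thus "(\<sigma>(x := t)) v = \<sigma> v" using v by auto
  qed
  have EBinv: "EB (\<sigma>(x := t)) = EB \<sigma>" for \<sigma> t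
    unfolding EB_def
  proof (intro sum.cong refl arg_cong2[where f="(*)"] ws_cong)
    fix b v \<tau> assume b: "b \<in> BB" and v: "v \<in> set (nb G b)"
    have "x \<notin> set (nb G b)" using b B_facs by (auto simp: BB_def dvar_def)
    thus "mrg U (\<sigma>(x := t)) \<tau> v = mrg U \<sigma> \<tau> v" using v by (auto simp: mrg_def)
  qed
  have Winv: "W s = W s0" for s unfolding W_def by (rule sum_upd_invariant[OF configs_finite[OF finU] x wsinv])
  have Cinv: "C s = C s0" for s unfolding C_def using sum_upd_invariant[OF configs_finite[OF finU] x, of "\<lambda>\<sigma>. ws G (FU - D) \<sigma> * EB \<sigma>"] wsinv EBinv by simp
  have uv: "\<bar>u s - v s\<bar> \<le> ZO * W s * (2 * tv * M ^ r)" for s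
  proof -
    have u: "u s = ZO * (\<Sum>\<sigma>\<in>configs U. ws G (FU - D) \<sigma> * (if \<sigma> x = s then 1 else 0) * (\<Sum>\<tau>\<in>configs Y. nu \<tau> * (Pa a \<sigma> \<tau> * ws G BB (mrg U \<sigma> \<tau>))))"
      unfolding u_def msg_unnorm[OF D x] BD(1) using finBB BD(2) by (simp add: ws_insert ws_Pa)
    have pi: "(\<Sum>\<tau>\<in>configs Y. piY \<tau> * (Pa a \<sigma> \<tau> * ws G BB (mrg U \<sigma> \<tau>))) = e a \<sigma> * EB \<sigma>" for \<sigma>
      using E_factor[OF a BBa, of "\<lambda>_. 1" \<sigma>] unfolding EB_def by (simp add: loc_def)
    have v: "v s = ZO * (\<Sum>\<sigma>\<in>configs U. ws G (FU - D) \<sigma> * (if \<sigma> x = s then 1 else 0) * (\<Sum>\<tau>\<in>configs Y. piY \<tau> * (Pa a \<sigma> \<tau> * ws G BB (mrg U \<sigma> \<tau>))))"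
      unfolding v_def C_def pi
      by (simp add: sum_distrib_left sum_distrib_right, intro sum.cong refl) (auto simp: e_es[OF a] x_def[symmetric])
    have "\<bar>u s - v s\<bar> = ZO * \<bar>\<Sum>\<sigma>\<in>configs U. ws G (FU - D) \<sigma> * (if \<sigma> x = s then 1 else 0) *
        ((\<Sum>\<tau>\<in>configs Y. nu \<tau> * (Pa a \<sigma> \<tau> * ws G BB (mrg U \<sigma> \<tau>))) - (\<Sum>\<tau>\<in>configs Y. piY \<tau> * (Pa a \<sigma> \<tau> * ws G BB (mrg U \<sigma> \<tau>))))\<bar>"
    proof -
      have "\<bar>u s - v s\<bar> = ZO * \<bar>(\<Sum>\<sigma>\<in>configs U. ws G (FU - D) \<sigma> * (if \<sigma> x = s then 1 else 0) * (\<Sum>\<tau>\<in>configs Y. nu \<tau> * (Pa a \<sigma> \<tau> * ws G BB (mrg U \<sigma> \<tau>))))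
         - (\<Sum>\<sigma>\<in>configs U. ws G (FU - D) \<sigma> * (if \<sigma> x = s then 1 else 0) * (\<Sum>\<tau>\<in>configs Y. piY \<tau> * (Pa a \<sigma> \<tau> * ws G BB (mrg U \<sigma> \<tau>))))\<bar>"
        unfolding u v using ZO_pos by (simp add: right_diff_distrib[symmetric] abs_mult)
      also have "(\<Sum>\<sigma>\<in>configs U. ws G (FU - D) \<sigma> * (if \<sigma> x = s then 1 else 0) * (\<Sum>\<tau>\<in>configs Y. nu \<tau> * (Pa a \<sigma> \<tau> * ws G BB (mrg U \<sigma> \<tau>))))
         - (\<Sum>\<sigma>\<in>configs U. ws G (FU - D) \<sigma> * (if \<sigma> x = s then 1 else 0) * (\<Sum>\<tau>\<in>configs Y. piY \<tau> * (Pa a \<sigma> \<tau> * ws G BB (mrg U \<sigma> \<tau>))))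
         = (\<Sum>\<sigma>\<in>configs U. ws G (FU - D) \<sigma> * (if \<sigma> x = s then 1 else 0) *
        ((\<Sum>\<tau>\<in>configs Y. nu \<tau> * (Pa a \<sigma> \<tau> * ws G BB (mrg U \<sigma> \<tau>))) - (\<Sum>\<tau>\<in>configs Y. piY \<tau> * (Pa a \<sigma> \<tau> * ws G BB (mrg U \<sigma> \<tau>)))))"
        by (subst sum_subtractf[symmetric]) (intro sum.cong refl, simp add: right_diff_distrib)
      finally show ?thesis .
    qed
    also have "\<dots> \<le> ZO * (\<Sum>\<sigma>\<in>configs U. ws G (FU - D) \<sigma> * (if \<sigma> x = s then 1 else 0) * (2 * tv * M ^ r))"
    proof (intro mult_left_mono order_trans[OF sum_abs] sum_mono)
      fix \<sigma> :: "'v \<Rightarrow> 'c" assume "\<sigma> \<in> configs U"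
      have bnd: "\<bar>Pa a \<sigma> \<tau> * ws G BB (mrg U \<sigma> \<tau>)\<bar> \<le> M ^ r" for \<tau>
      proof -
        have "Pa a \<sigma> \<tau> * ws G BB (mrg U \<sigma> \<tau>) = ws G (insert a BB) (mrg U \<sigma> \<tau>)"
          using finBB BD(2) by (simp add: ws_insert ws_Pa)
        moreover have "insert a BB \<subseteq> B" using a by (auto simp: BB_def)
        ultimately show ?thesis using ws_B_bnd[of "insert a BB" \<sigma> \<tau>] m_pos
          by (metis abs_of_nonneg order.trans less_imp_le zero_le_power)
      qed
      have "FU - D \<subseteq> facs G" by (auto simp: FU_def)
      hence ws0: "ws G (FU - D) \<sigma> \<ge> 0" using ws_pos[of "FU - D" \<sigma>] by simp
      show "\<bar>ws G (FU - D) \<sigma> * (if \<sigma> x = s then 1 else 0) *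
        ((\<Sum>\<tau>\<in>configs Y. nu \<tau> * (Pa a \<sigma> \<tau> * ws G BB (mrg U \<sigma> \<tau>))) - (\<Sum>\<tau>\<in>configs Y. piY \<tau> * (Pa a \<sigma> \<tau> * ws G BB (mrg U \<sigma> \<tau>))))\<bar>
        \<le> ws G (FU - D) \<sigma> * (if \<sigma> x = s then 1 else 0) * (2 * tv * M ^ r)"
        using approx[of "\<lambda>\<tau>. Pa a \<sigma> \<tau> * ws G BB (mrg U \<sigma> \<tau>)", OF bnd] ws0
        by (simp add: abs_mult mult_left_mono)
    qed (use ZO_pos in auto)
    also have "\<dots> = ZO * W s * (2 * tv * M ^ r)" unfolding W_def by (simp add: sum_distrib_right sum_distrib_left mult_ac)
    finally show ?thesis .
  qed
  have W0: "W s0 > 0"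
  proof -
    have "W s0 \<ge> ws G (FU - D) (cs U s0) * (if cs U s0 x = s0 then 1 else 0)"
      unfolding W_def using wsFUD_nn finCU by (intro member_le_sum) auto
    moreover have "ws G (FU - D) (cs U s0) > 0" using wsFUD_pos .
    ultimately show ?thesis using x by (simp add: cs_def)
  qed
  have EBge: "EB \<sigma> \<ge> m ^ r" for \<sigma>
    unfolding EB_def using E_bounds(1)[of "m ^ r" "\<lambda>\<tau>. ws G BB (mrg U \<sigma> \<tau>)" "M ^ r" piY] ws_B_bnd[of BB] piY_nonneg piY_sum
    by (auto simp: BB_def)
  have Cge: "C s0 \<ge> W s0 * m ^ r"
  proof -
    have "W s0 * m ^ r = (\<Sum>\<sigma>\<in>configs U. ws G (FU - D) \<sigma> * m ^ r * (if \<sigma> x = s0 then 1 else 0))"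
      unfolding W_def by (simp add: sum_distrib_right sum_distrib_left mult_ac)
    also have "\<dots> \<le> C s0" unfolding C_def using wsFUD_nn EBge
      by (intro sum_mono mult_right_mono mult_left_mono) auto
    finally show ?thesis .
  qed
  have C0: "C s0 > 0" using Cge W0 m_pos
    by (meson less_le_trans mult_pos_pos zero_less_power)
  have u_nonneg: "u s \<ge> 0" for s
    unfolding u_def using weight_nn[OF wf_del[OF wf, of D]] by (intro sum_nonneg) auto
  have Sv: "(\<Sum>s\<in>UNIV. v s) = ZO * C s0 * (\<Sum>s\<in>UNIV. es a s)"
  proof -
    have "(\<Sum>s\<in>UNIV. v s) = (\<Sum>s\<in>UNIV. ZO * C s0 * es a s)"
      unfolding v_def by (intro sum.cong refl) (metis Cinv)
    thus ?thesis by (simp add: sum_distrib_left)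
  qed
  have Svpos: "(\<Sum>s\<in>UNIV. v s) \<ge> ZO * (W s0 * m ^ r) * m"
    unfolding Sv using ZO_pos W0 m_pos Cge es_sum_ge[OF a] C0
    by (intro mult_mono mult_left_mono) auto
  have pp: "ZO * (W s0 * m ^ r) * m > 0" using ZO_pos W0 m_pos by simp
  have Svp: "(\<Sum>s\<in>UNIV. v s) > 0" using Svpos pp by linarith
  have v_nonneg: "v s \<ge> 0" for s
  proof -
    have "es a s \<ge> 0" using es_bnd[OF a, of s] m_pos by linarith
    thus ?thesis unfolding v_def Cinv[of s] using ZO_pos C0 by simp
  qed
  have msg: "msg_fv G a x s = u s / (\<Sum>c\<in>UNIV. u c)" for s
    unfolding msg_fv_def u_def D_def[symmetric] using marg1_ratio2[of "del_facs G D" x s] finV by simp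
  have vn: "v s / (\<Sum>c\<in>UNIV. v c) = esn a s" for s
  proof -
    have "(\<Sum>c\<in>UNIV. v c) = (\<Sum>c\<in>UNIV. ZO * C s0 * es a c)" unfolding Sv by (simp add: sum_distrib_left)
    thus ?thesis unfolding esn_def using norm_scale[of "ZO * C s0" "es a" s UNIV] ZO_pos C0
      by (simp add: v_def Cinv[of s])
  qed
  have "(\<Sum>s\<in>UNIV. \<bar>msg_fv G a x s - esn a s\<bar>) \<le> 2 * (\<Sum>s\<in>UNIV. \<bar>u s - v s\<bar>) / (\<Sum>s\<in>UNIV. v s)"
    unfolding msg vn[symmetric] using norm_L1[of UNIV u v] u_nonneg v_nonneg Svp by simp
  also have "\<dots> \<le> 2 * (real (card (UNIV::'c set)) * (ZO * W s0 * (2 * tv * M ^ r))) / (ZO * (W s0 * m ^ r) * m)"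
  proof (intro frac_le mult_left_mono)
    show "(\<Sum>s\<in>UNIV. \<bar>u s - v s\<bar>) \<le> real (card (UNIV::'c set)) * (ZO * W s0 * (2 * tv * M ^ r))"
    proof (rule sum_le_card_sup)
      fix s show "\<bar>u s - v s\<bar> \<le> ZO * W s0 * (2 * tv * M ^ r)" using uv[of s] Winv[of s] by simp
    qed simp
    show "0 \<le> 2 * (real (card (UNIV::'c set)) * (ZO * W s0 * (2 * tv * M ^ r)))"
    proof -
      have "tv \<ge> 0" using tv_eq sum_nonneg[of "configs Y" "\<lambda>\<tau>. \<bar>nu \<tau> - piY \<tau>\<bar>"] by simp
      thus ?thesis using ZO_pos W0 M_ge1 by simp
    qed
    show "0 < ZO * (W s0 * m ^ r) * m" using ZO_pos W0 m_pos by simp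
  qed (use Svpos in auto)
  also have "\<dots> = 4 * real (card (UNIV::'c set)) * tv * M ^ r / m ^ (r + 1)"
    using ZO_pos W0 m_pos by (simp add: field_simps)
  finally show ?thesis unfolding x_def .
qed

end



lemma sum_delta_mult:
  fixes f :: "_ \<Rightarrow> real"
  shows "finite A \<Longrightarrow> a \<in> A \<Longrightarrow> (\<Sum>x\<in>A. f x * (if x = a then 1 else 0)) = f a"
  by (simp add: if_distrib[of "(*) _"] sum.delta' cong: if_cong)

lemma prod_bnd_low:
  fixes f :: "_ \<Rightarrow> real"
  assumes "finite S" "card S \<le> r" "\<And>a. a \<in> S \<Longrightarrow> q \<le> f a" "0 \<le> q" "q \<le> 1"
  shows "q ^ r \<le> (\<Prod>a\<in>S. f a)"
proof -
  have "q ^ card S \<le> (\<Prod>a\<in>S. f a)" using prod_mono[of S "\<lambda>_. q" f] assms by auto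
  moreover have "q ^ r \<le> q ^ card S" using power_decreasing[OF assms(2), of q] assms by simp
  ultimately show ?thesis by linarith
qed

context cavb begin

definition "N \<sigma>0 = (\<Sum>\<rho>\<in>configs (vars G). if restrict \<rho> U = \<sigma>0 then weight G \<rho> else 0)"
definition "h1 \<sigma> = ZO * ws G FU \<sigma> * (\<Prod>a\<in>B. es a (\<sigma> (xto G a U)))"

lemma FU_facs: "FU \<subseteq> facs G" by (auto simp: FU_def)
lemma wsFU_pos: "ws G FU \<sigma> > 0" using ws_pos[OF FU_facs] .
lemma FO_empty: "{} \<inter> FO = {}" by simp

lemma N_eq: assumes "\<sigma>0 \<in> configs U"
  shows "N \<sigma>0 = ZO * ws G FU \<sigma>0 * (\<Sum>\<tau>\<in>configs Y. nu \<tau> * ws G B (mrg U \<sigma>0 \<tau>))"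
proof -
  have "N \<sigma>0 = (\<Sum>\<rho>\<in>configs (vars G). weight (del_facs G {}) \<rho> * ((\<lambda>\<sigma>. if \<sigma> = \<sigma>0 then 1 else 0) (restrict \<rho> U) * (\<lambda>_. 1) \<rho>))"
    unfolding N_def by (intro sum.cong) auto
  also have "\<dots> = ZO * (\<Sum>\<sigma>\<in>configs U. ws G (FU - {}) \<sigma> * (if \<sigma> = \<sigma>0 then 1 else 0) * (\<Sum>\<tau>\<in>configs Y. nu \<tau> * (ws G (B - {}) (mrg U \<sigma> \<tau>) * 1)))"
    by (rule master) (auto simp: loc_def)
  also have "(\<Sum>\<sigma>\<in>configs U. ws G (FU - {}) \<sigma> * (if \<sigma> = \<sigma>0 then 1 else 0) * (\<Sum>\<tau>\<in>configs Y. nu \<tau> * (ws G (B - {}) (mrg U \<sigma> \<tau>) * 1)))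
     = (\<Sum>\<sigma>\<in>configs U. (ws G FU \<sigma> * (\<Sum>\<tau>\<in>configs Y. nu \<tau> * ws G B (mrg U \<sigma> \<tau>))) * (if \<sigma> = \<sigma>0 then 1 else 0))"
    by (intro sum.cong) auto
  also have "\<dots> = ws G FU \<sigma>0 * (\<Sum>\<tau>\<in>configs Y. nu \<tau> * ws G B (mrg U \<sigma>0 \<tau>))"
    using finCU assms by (rule sum_delta_mult)
  finally show ?thesis by simp
qed

lemma sumN: "(\<Sum>\<sigma>\<in>configs U. N \<sigma>) = (\<Sum>\<rho>\<in>configs (vars G). weight G \<rho>)"
  unfolding N_def using fiber_sum[of "configs (vars G)" "configs U" "\<lambda>\<rho>. restrict \<rho> U" "weight G" "\<lambda>_. 1"] finV finCU
  by simp

lemma marg_N: "marg G U \<sigma>0 = N \<sigma>0 / (\<Sum>\<sigma>\<in>configs U. N \<sigma>)"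
proof -
  have "marg G U \<sigma>0 = N \<sigma>0 / (\<Sum>\<rho>\<in>configs (vars G). weight G \<rho>)" unfolding marg_ratio N_def ..
  thus ?thesis using sumN by simp
qed

lemma N_nn: "N \<sigma> \<ge> 0" unfolding N_def using weight_nn[OF wf] by (intro sum_nonneg) auto

lemma tv_nn: "tv \<ge> 0" using tv_eq sum_nonneg[of "configs Y" "\<lambda>\<tau>. \<bar>nu \<tau> - piY \<tau>\<bar>"] by simp

lemma h1_ge: "h1 \<sigma> \<ge> ZO * ws G FU \<sigma> * m ^ r"
proof -
  have "m ^ r \<le> (\<Prod>a\<in>B. es a (\<sigma> (xto G a U)))"
    using finB rB es_bnd m_pos m_le1 by (intro prod_bnd_low) auto
  thus ?thesis unfolding h1_def using ZO_pos wsFU_pos by simp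
qed

lemma N_h1: assumes "\<sigma> \<in> configs U" shows "\<bar>N \<sigma> - h1 \<sigma>\<bar> \<le> ZO * ws G FU \<sigma> * (2 * tv * M ^ r)"
proof -
  have pe: "(\<Sum>\<tau>\<in>configs Y. piY \<tau> * ws G B (mrg U \<sigma> \<tau>)) = (\<Prod>a\<in>B. es a (\<sigma> (xto G a U)))"
    unfolding E_prod[OF order_refl] by (intro prod.cong refl e_es)
  have "\<bar>N \<sigma> - h1 \<sigma>\<bar> = ZO * ws G FU \<sigma> * \<bar>(\<Sum>\<tau>\<in>configs Y. nu \<tau> * ws G B (mrg U \<sigma> \<tau>)) - (\<Sum>\<tau>\<in>configs Y. piY \<tau> * ws G B (mrg U \<sigma> \<tau>))\<bar>"
    unfolding N_eq[OF assms] h1_def pe using ZO_pos wsFU_pos[of \<sigma>]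
    by (simp add: right_diff_distrib[symmetric] abs_mult)
  also have "\<dots> \<le> ZO * ws G FU \<sigma> * (2 * tv * M ^ r)"
  proof (intro mult_left_mono approx)
    fix \<tau> show "\<bar>ws G B (mrg U \<sigma> \<tau>)\<bar> \<le> M ^ r"
    proof -
      have "0 \<le> m ^ r" using m_pos by simp
      thus ?thesis using ws_B_bnd[of B \<sigma> \<tau>] by (simp add: abs_le_iff)
    qed
  qed (use ZO_pos wsFU_pos[of \<sigma>] in auto)
  finally show ?thesis .
qed

lemma part1A: "(\<Sum>\<sigma>\<in>configs U. \<bar>marg G U \<sigma> - h1 \<sigma> / (\<Sum>\<sigma>'\<in>configs U. h1 \<sigma>')\<bar>) \<le> 4 * tv * M ^ r / m ^ r"
proof -
  define W where "W = (\<Sum>\<sigma>\<in>configs U. ws G FU \<sigma>)"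
  have W0: "W > 0" unfolding W_def using finCU wsFU_pos by (intro sum_pos) (auto simp: configs_nonempty)
  have h1nn: "h1 \<sigma> \<ge> 0" for \<sigma> using h1_ge[of \<sigma>] ZO_pos wsFU_pos[of \<sigma>] m_pos
    by (meson mult_nonneg_nonneg order.trans less_imp_le zero_le_power)
  have Sh: "(\<Sum>\<sigma>\<in>configs U. h1 \<sigma>) \<ge> ZO * W * m ^ r"
  proof -
    have "ZO * W * m ^ r = (\<Sum>\<sigma>\<in>configs U. ZO * ws G FU \<sigma> * m ^ r)" unfolding W_def
      by (simp add: sum_distrib_left sum_distrib_right)
    also have "\<dots> \<le> (\<Sum>\<sigma>\<in>configs U. h1 \<sigma>)" using h1_ge by (intro sum_mono) auto
    finally show ?thesis .
  qed
  have pos: "ZO * W * m ^ r > 0" using ZO_pos W0 m_pos by simp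
  have "(\<Sum>\<sigma>\<in>configs U. \<bar>marg G U \<sigma> - h1 \<sigma> / (\<Sum>\<sigma>'\<in>configs U. h1 \<sigma>')\<bar>) \<le>
     2 * (\<Sum>\<sigma>\<in>configs U. \<bar>N \<sigma> - h1 \<sigma>\<bar>) / (\<Sum>\<sigma>\<in>configs U. h1 \<sigma>)"
    unfolding marg_N using norm_L1[of "configs U" N h1] finCU N_nn h1nn Sh pos by simp
  also have "\<dots> \<le> 2 * (ZO * W * (2 * tv * M ^ r)) / (ZO * W * m ^ r)"
  proof (intro frac_le mult_left_mono)
    have "(\<Sum>\<sigma>\<in>configs U. \<bar>N \<sigma> - h1 \<sigma>\<bar>) \<le> (\<Sum>\<sigma>\<in>configs U. ZO * ws G FU \<sigma> * (2 * tv * M ^ r))"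
      using N_h1 by (intro sum_mono) auto
    thus "(\<Sum>\<sigma>\<in>configs U. \<bar>N \<sigma> - h1 \<sigma>\<bar>) \<le> ZO * W * (2 * tv * M ^ r)"
      unfolding W_def by (simp add: sum_distrib_left sum_distrib_right mult_ac)
    show "0 \<le> 2 * (ZO * W * (2 * tv * M ^ r))" using ZO_pos W0 tv_nn M_ge1 by simp
  qed (use pos Sh in auto)
  also have "\<dots> = 4 * tv * M ^ r / m ^ r" using ZO_pos W0 m_pos by (simp add: field_simps)
  finally show ?thesis .
qed

definition "qq = m / (real (card (UNIV::'c set)) * M)"

lemma qq_bnd: "0 \<le> qq" "qq \<le> 1"
proof -
  have c: "real (card (UNIV::'c set)) \<ge> 1" by (simp add: Suc_le_eq card_gt_0_iff)
  show "0 \<le> qq" unfolding qq_def using m_pos M_ge1 by simp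
  have "m \<le> real (card (UNIV::'c set)) * M" using m_le1 M_ge1 c
    by (metis dual_order.trans mult_1_left mult_mono zero_le_one)
  thus "qq \<le> 1" unfolding qq_def using c M_ge1 by simp
qed

lemma qq_pos: "qq > 0"
  unfolding qq_def using m_pos M_ge1 by (simp add: card_gt_0_iff)

lemma msg_bnd: "0 \<le> msg_fv G a x s \<and> msg_fv G a x s \<le> 1"
  unfolding msg_fv_def using marg1_nonneg[OF wf_del[OF wf]] marg1_le1[OF wf_del[OF wf]] by auto

lemma msg_pt: "a \<in> B \<Longrightarrow> \<bar>msg_fv G a (xto G a U) s - esn a s\<bar> \<le> 4 * real (card (UNIV::'c set)) * tv * M ^ r / m ^ (r + 1)"
  using member_le_sum[of s UNIV "\<lambda>s. \<bar>msg_fv G a (xto G a U) s - esn a s\<bar>"] msg_approx by force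

lemma gibbs_ind: "gibbs (induced G U) \<sigma> = ws G FU \<sigma> / (\<Sum>\<tau>\<in>configs U. ws G FU \<tau>)"
  by (simp add: gibbs_def weight_def ws_def induced_def FU_def)

lemma part1B: "(\<Sum>\<sigma>\<in>configs U. \<bar>barmu G U \<sigma> - h1 \<sigma> / (\<Sum>\<sigma>'\<in>configs U. h1 \<sigma>')\<bar>)
   \<le> 2 * (real r * (4 * real (card (UNIV::'c set)) * tv * M ^ r / m ^ (r + 1))) / qq ^ r"
proof -
  define \<delta> where "\<delta> = 4 * real (card (UNIV::'c set)) * tv * M ^ r / m ^ (r + 1)"
  define gi where "gi \<sigma> = gibbs (induced G U) \<sigma>" for \<sigma>
  define g1 where "g1 \<sigma> = gi \<sigma> * (\<Prod>a\<in>B. msg_fv G a (xto G a U) (\<sigma> (xto G a U)))" for \<sigma>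
  define h2 where "h2 \<sigma> = gi \<sigma> * (\<Prod>a\<in>B. esn a (\<sigma> (xto G a U)))" for \<sigma>
  define W where "W = (\<Sum>\<sigma>\<in>configs U. ws G FU \<sigma>)"
  have W0: "W > 0" unfolding W_def using finCU wsFU_pos by (intro sum_pos) (auto simp: configs_nonempty)
  have gi: "gi \<sigma> = ws G FU \<sigma> / W" for \<sigma> unfolding gi_def gibbs_ind W_def ..
  have ginn: "gi \<sigma> \<ge> 0" for \<sigma> unfolding gi using wsFU_pos[of \<sigma>] W0 by simp
  have gisum: "(\<Sum>\<sigma>\<in>configs U. gi \<sigma>) = 1" unfolding gi sum_divide_distrib[symmetric] W_def[symmetric] using W0 by simp
  have barmu: "barmu G U \<sigma> = g1 \<sigma> / (\<Sum>\<sigma>\<in>configs U. g1 \<sigma>)" for \<sigma>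
    unfolding barmu_def g1_def gi_def Let_def ..
  define c where "c = 1 / (ZO * W * (\<Prod>a\<in>B. \<Sum>s\<in>UNIV. es a s))"
  have Spos: "(\<Sum>s\<in>UNIV. es a s) > 0" if "a \<in> B" for a using es_sum_ge[OF that] m_pos by linarith
  have cpos: "c > 0" unfolding c_def using ZO_pos W0 Spos by (simp add: prod_pos)
  have h2h1: "h2 \<sigma> = c * h1 \<sigma>" for \<sigma>
    unfolding h2_def h1_def c_def gi esn_def prod_dividef using ZO_pos W0 by simp
  have h2n: "h2 \<sigma> / (\<Sum>\<sigma>\<in>configs U. h2 \<sigma>) = h1 \<sigma> / (\<Sum>\<sigma>\<in>configs U. h1 \<sigma>)" for \<sigma>
    unfolding h2h1 using norm_scale[of c h1] cpos by simp
  have esn_q: "qq ^ r \<le> (\<Prod>a\<in>B. esn a (\<sigma> (xto G a U)))" for \<sigma>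
    using finB rB esn_bnd qq_bnd by (intro prod_bnd_low) (auto simp: qq_def)
  have Sh2: "(\<Sum>\<sigma>\<in>configs U. h2 \<sigma>) \<ge> qq ^ r"
  proof -
    have "(\<Sum>\<sigma>\<in>configs U. gi \<sigma> * qq ^ r) \<le> (\<Sum>\<sigma>\<in>configs U. h2 \<sigma>)"
      unfolding h2_def using ginn esn_q by (intro sum_mono mult_left_mono) auto
    thus ?thesis using gisum by (simp add: sum_distrib_right[symmetric])
  qed
  have qpos: "qq ^ r > 0" using qq_pos by simp
  have g1nn: "g1 \<sigma> \<ge> 0" for \<sigma> unfolding g1_def using ginn msg_bnd by (intro mult_nonneg_nonneg prod_nonneg) auto
  have h2nn: "h2 \<sigma> \<ge> 0" for \<sigma> unfolding h2_def using ginn esn_bnd m_pos M_ge1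
    by (intro mult_nonneg_nonneg prod_nonneg) (auto intro: order.trans[OF _ conjunct1[OF esn_bnd]])
  have gh: "\<bar>g1 \<sigma> - h2 \<sigma>\<bar> \<le> gi \<sigma> * (real r * \<delta>)" for \<sigma>
  proof -
    have "\<bar>g1 \<sigma> - h2 \<sigma>\<bar> = gi \<sigma> * \<bar>(\<Prod>a\<in>B. msg_fv G a (xto G a U) (\<sigma> (xto G a U))) - (\<Prod>a\<in>B. esn a (\<sigma> (xto G a U)))\<bar>"
      unfolding g1_def h2_def using ginn[of \<sigma>] by (simp add: right_diff_distrib[symmetric] abs_mult)
    also have "\<dots> \<le> gi \<sigma> * (\<Sum>a\<in>B. \<bar>msg_fv G a (xto G a U) (\<sigma> (xto G a U)) - esn a (\<sigma> (xto G a U))\<bar>)"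
    proof (intro mult_left_mono prod_diff_le finB ginn)
      fix a assume a: "a \<in> B"
      show "0 \<le> esn a (\<sigma> (xto G a U)) \<and> esn a (\<sigma> (xto G a U)) \<le> 1"
        using esn_bnd[OF a] qq_bnd unfolding qq_def by (meson order.trans)
    qed (use msg_bnd in auto)
    also have "\<dots> \<le> gi \<sigma> * (real (card B) * \<delta>)"
      using msg_pt ginn[of \<sigma>] unfolding \<delta>_def by (intro mult_left_mono sum_le_card_sup finB) auto
    also have "\<dots> \<le> gi \<sigma> * (real r * \<delta>)"
    proof -
      have "\<delta> \<ge> 0" unfolding \<delta>_def using tv_nn m_pos M_ge1 by simp
      thus ?thesis using rB ginn[of \<sigma>] by (intro mult_left_mono mult_right_mono) auto
    qed
    finally show ?thesis .
  qed
  have "(\<Sum>\<sigma>\<in>configs U. \<bar>barmu G U \<sigma> - h1 \<sigma> / (\<Sum>\<sigma>'\<in>configs U. h1 \<sigma>')\<bar>) \<le> 2 * (\<Sum>\<sigma>\<in>configs U. \<bar>g1 \<sigma> - h2 \<sigma>\<bar>) / (\<Sum>\<sigma>\<in>configs U. h2 \<sigma>)"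
    unfolding barmu h2n[symmetric] using norm_L1[of "configs U" g1 h2] finCU g1nn h2nn Sh2 qpos by simp
  also have "\<dots> \<le> 2 * (real r * \<delta>) / qq ^ r"
  proof (intro frac_le mult_left_mono)
    have "(\<Sum>\<sigma>\<in>configs U. \<bar>g1 \<sigma> - h2 \<sigma>\<bar>) \<le> (\<Sum>\<sigma>\<in>configs U. gi \<sigma> * (real r * \<delta>))"
      using gh by (intro sum_mono) auto
    thus "(\<Sum>\<sigma>\<in>configs U. \<bar>g1 \<sigma> - h2 \<sigma>\<bar>) \<le> real r * \<delta>" using gisum by (simp add: sum_distrib_right[symmetric])
    show "0 \<le> 2 * (real r * \<delta>)" unfolding \<delta>_def using tv_nn m_pos M_ge1 by simp
  qed (use qpos Sh2 in auto)
  finally show ?thesis unfolding \<delta>_def .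
qed

lemma part1: "(\<Sum>\<sigma>\<in>configs U. \<bar>barmu G U \<sigma> - marg G U \<sigma>\<bar>)
   \<le> 2 * (real r * (4 * real (card (UNIV::'c set)) * tv * M ^ r / m ^ (r + 1))) / qq ^ r + 4 * tv * M ^ r / m ^ r"
  using L1_triangle[of "barmu G U" "marg G U" "configs U" "\<lambda>\<sigma>. h1 \<sigma> / (\<Sum>\<sigma>'\<in>configs U. h1 \<sigma>')"]
    part1A part1B
  by (smt (verit, ccfv_SIG) abs_minus_commute sum.cong)

end



lemma sum_configs_single:
  fixes F :: "('v \<Rightarrow> 'c::finite) \<Rightarrow> real"
  shows "(\<Sum>\<tau>\<in>configs {y}. F \<tau>) = (\<Sum>c\<in>UNIV. F (cs {y} c))"
proof -
  have eq: "\<tau> \<in> configs {y} \<Longrightarrow> cs {y} (\<tau> y) = \<tau>" for \<tau> :: "'v \<Rightarrow> 'c"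
    by (auto simp: cs_def configs_mem fun_eq_iff)
  show ?thesis
    by (rule sum.reindex_bij_witness[of _ "\<lambda>c. cs {y} c" "\<lambda>\<tau>. \<tau> y"]) (auto simp: eq, simp add: cs_def)
qed

context cavb begin

lemma p_marg_single: "y \<in> Y \<Longrightarrow> (\<Sum>\<tau>\<in>configs Y. piY \<tau> * (if \<tau> y = c then 1 else 0)) = p y c"
proof -
  assume y: "y \<in> Y"
  have "(\<Sum>\<tau>\<in>configs Y. piY \<tau> * (if \<tau> y = c then 1 else 0)) = (\<Sum>\<tau>\<in>configs {y}. pr {y} p \<tau> * (if \<tau> y = c then 1 else 0))"
    unfolding piY_def using y finY p_sum by (intro pr_marg) (auto simp: loc_def)
  also have "\<dots> = (\<Sum>c'\<in>UNIV. p y c' * (if c' = c then 1 else 0))"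
    unfolding sum_configs_single by (simp add: pr_def cs_def)
  also have "\<dots> = p y c" by (simp add: if_distrib[of "(*) _"] cong: if_cong)
  finally show ?thesis .
qed

lemma vf_approx:
  assumes a: "a \<in> B" and y: "y \<in> set (nb G a) - U"
  shows "(\<Sum>c\<in>UNIV. \<bar>msg_vf G y a c - p y c\<bar>) \<le> 4 * real (card (UNIV::'c set)) * tv * M ^ r / m ^ r"
proof -
  have yY: "y \<in> Y" using B_nbY[OF a] y by auto
  have D: "{a} \<subseteq> facs G" "{a} \<inter> FO = {}" using a B_facs facs_split by auto
  have FUa: "FU - {a} = FU" using a facs_split by auto
  define ind where "ind c \<tau> = (if \<tau> y = c then 1 else (0::real))" for c :: 'c and \<tau> :: "'v \<Rightarrow> 'c"
  define u where "u c = (\<Sum>\<rho>\<in>configs (vars G). if \<rho> y = c then weight (del_facs G {a}) \<rho> else 0)" for c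
  define EB where "EB \<sigma> = (\<Sum>\<tau>\<in>configs Y. piY \<tau> * ws G (B - {a}) (mrg U \<sigma> \<tau>))" for \<sigma>
  define K where "K = ZO * (\<Sum>\<sigma>\<in>configs U. ws G FU \<sigma> * EB \<sigma>)"
  define v where "v c = K * p y c" for c
  define W where "W = (\<Sum>\<sigma>\<in>configs U. ws G FU \<sigma>)"
  have W0: "W > 0" unfolding W_def using finCU wsFU_pos by (intro sum_pos) (auto simp: configs_nonempty)
  have lind: "loc Y (ind c)" for c unfolding ind_def loc_def using yY by auto
  have u: "u c = ZO * (\<Sum>\<sigma>\<in>configs U. ws G FU \<sigma> * (\<Sum>\<tau>\<in>configs Y. nu \<tau> * (ws G (B - {a}) (mrg U \<sigma> \<tau>) * ind c \<tau>)))" for c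
  proof -
    have "u c = (\<Sum>\<rho>\<in>configs (vars G). weight (del_facs G {a}) \<rho> * ((\<lambda>_. 1) (restrict \<rho> U) * ind c \<rho>))"
      unfolding u_def ind_def by (intro sum.cong) auto
    also have "\<dots> = ZO * (\<Sum>\<sigma>\<in>configs U. ws G (FU - {a}) \<sigma> * 1 * (\<Sum>\<tau>\<in>configs Y. nu \<tau> * (ws G (B - {a}) (mrg U \<sigma> \<tau>) * ind c \<tau>)))"
      by (rule master[OF D lind])
    finally show ?thesis unfolding FUa by simp
  qed
  have fac: "(\<Sum>\<tau>\<in>configs Y. piY \<tau> * (ws G (B - {a}) (mrg U \<sigma> \<tau>) * ind c \<tau>)) = p y c * EB \<sigma>" for \<sigma> c
  proof -
    have l1: "loc {y} (ind c)" unfolding ind_def loc_def by auto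
    have l2: "loc (Y - {y}) (\<lambda>\<tau>. ws G (B - {a}) (mrg U \<sigma> \<tau>))"
      unfolding loc_def
    proof (intro allI impI ws_cong)
      fix \<rho> \<rho>' :: "'v \<Rightarrow> 'c" and b v assume h: "\<forall>z\<in>Y - {y}. \<rho> z = \<rho>' z" and b: "b \<in> B - {a}" and v: "v \<in> set (nb G b)"
      show "mrg U \<sigma> \<rho> v = mrg U \<sigma> \<rho>' v"
      proof (cases "v \<in> U")
        case False
        have "v \<in> Y" using B_nbY[of b] b v False by auto
        moreover have "v \<noteq> y" using B_disj[OF a, of b] b v False y by auto
        ultimately show ?thesis using h False by (simp add: mrg_def)
      qed (simp add: mrg_def)
    qed
    have "(\<Sum>\<tau>\<in>configs Y. piY \<tau> * (ind c \<tau> * ws G (B - {a}) (mrg U \<sigma> \<tau>))) =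
       (\<Sum>\<tau>\<in>configs Y. piY \<tau> * ind c \<tau>) * (\<Sum>\<tau>\<in>configs Y. piY \<tau> * ws G (B - {a}) (mrg U \<sigma> \<tau>))"
      unfolding piY_def using yY by (intro pr_factor2[OF finY _ p_sum l1 l2]) auto
    thus ?thesis using p_marg_single[OF yY, of c] unfolding EB_def ind_def by (simp add: mult_ac)
  qed
  have v: "v c = ZO * (\<Sum>\<sigma>\<in>configs U. ws G FU \<sigma> * (\<Sum>\<tau>\<in>configs Y. piY \<tau> * (ws G (B - {a}) (mrg U \<sigma> \<tau>) * ind c \<tau>)))" for c
    unfolding v_def K_def fac by (simp add: sum_distrib_left sum_distrib_right mult_ac)
  have uv: "\<bar>u c - v c\<bar> \<le> ZO * W * (2 * tv * M ^ r)" for c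
  proof -
    have "\<bar>u c - v c\<bar> = ZO * \<bar>\<Sum>\<sigma>\<in>configs U. ws G FU \<sigma> * ((\<Sum>\<tau>\<in>configs Y. nu \<tau> * (ws G (B - {a}) (mrg U \<sigma> \<tau>) * ind c \<tau>))
        - (\<Sum>\<tau>\<in>configs Y. piY \<tau> * (ws G (B - {a}) (mrg U \<sigma> \<tau>) * ind c \<tau>)))\<bar>"
      unfolding u v using ZO_pos
      by (simp add: right_diff_distrib[symmetric] abs_mult sum_subtractf[symmetric])
    also have "\<dots> \<le> ZO * (\<Sum>\<sigma>\<in>configs U. ws G FU \<sigma> * (2 * tv * M ^ r))"
    proof (intro mult_left_mono order_trans[OF sum_abs] sum_mono)
      fix \<sigma> :: "'v \<Rightarrow> 'c"
      have bnd: "\<bar>ws G (B - {a}) (mrg U \<sigma> \<tau>) * ind c \<tau>\<bar> \<le> M ^ r" for \<tau>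
      proof -
        have "0 \<le> m ^ r" using m_pos by simp
        hence "\<bar>ws G (B - {a}) (mrg U \<sigma> \<tau>)\<bar> \<le> M ^ r" using ws_B_bnd[of "B - {a}" \<sigma> \<tau>] by (auto simp: abs_le_iff)
        moreover have "\<bar>ind c \<tau>\<bar> \<le> 1" unfolding ind_def by simp
        ultimately show ?thesis using M_ge1 by (simp add: abs_mult) (metis abs_ge_zero mult_le_one mult.right_neutral mult_mono zero_le_one order.trans)
      qed
      show "\<bar>ws G FU \<sigma> * ((\<Sum>\<tau>\<in>configs Y. nu \<tau> * (ws G (B - {a}) (mrg U \<sigma> \<tau>) * ind c \<tau>))
        - (\<Sum>\<tau>\<in>configs Y. piY \<tau> * (ws G (B - {a}) (mrg U \<sigma> \<tau>) * ind c \<tau>)))\<bar> \<le> ws G FU \<sigma> * (2 * tv * M ^ r)"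
        using approx[of "\<lambda>\<tau>. ws G (B - {a}) (mrg U \<sigma> \<tau>) * ind c \<tau>", OF bnd] wsFU_pos[of \<sigma>]
        by (simp add: abs_mult)
    qed (use ZO_pos in auto)
    also have "\<dots> = ZO * W * (2 * tv * M ^ r)" unfolding W_def by (simp add: sum_distrib_right sum_distrib_left mult_ac)
    finally show ?thesis .
  qed
  have EBge: "EB \<sigma> \<ge> m ^ r" for \<sigma>
    unfolding EB_def using E_bounds(1)[of "m ^ r" "\<lambda>\<tau>. ws G (B - {a}) (mrg U \<sigma> \<tau>)" "M ^ r" piY] ws_B_bnd[of "B - {a}"] piY_nonneg piY_sum
    by auto
  have Kge: "K \<ge> ZO * W * m ^ r"
  proof -
    have "W * m ^ r = (\<Sum>\<sigma>\<in>configs U. ws G FU \<sigma> * m ^ r)" unfolding W_def by (simp add: sum_distrib_right)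
    also have "\<dots> \<le> (\<Sum>\<sigma>\<in>configs U. ws G FU \<sigma> * EB \<sigma>)"
      using wsFU_pos EBge by (intro sum_mono mult_left_mono) (auto intro: less_imp_le)
    finally show ?thesis unfolding K_def using ZO_pos by (simp add: mult.assoc)
  qed
  have pp: "ZO * W * m ^ r > 0" using ZO_pos W0 m_pos by simp
  have K0: "K > 0" using Kge pp by linarith
  have Sv: "(\<Sum>c\<in>UNIV. v c) = K" unfolding v_def by (simp add: sum_distrib_left[symmetric] p_sum)
  have vn: "v c / (\<Sum>c\<in>UNIV. v c) = p y c" for c using K0 by (simp only: Sv) (simp add: v_def)
  have vnn: "v c \<ge> 0" for c unfolding v_def using K0 p_nonneg by simp
  have unn: "u c \<ge> 0" for c unfolding u_def using weight_nn[OF wf_del[OF wf, of "{a}"]] by (intro sum_nonneg) auto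
  have msg: "msg_vf G y a c = u c / (\<Sum>c\<in>UNIV. u c)" for c
    unfolding msg_vf_def u_def using marg1_ratio2[of "del_facs G {a}" y c] finV by simp
  have "(\<Sum>c\<in>UNIV. \<bar>msg_vf G y a c - p y c\<bar>) \<le> 2 * (\<Sum>c\<in>UNIV. \<bar>u c - v c\<bar>) / (\<Sum>c\<in>UNIV. v c)"
    unfolding msg vn[symmetric] using norm_L1[of UNIV u v] unn vnn Sv K0 by simp
  also have "\<dots> \<le> 2 * (real (card (UNIV::'c set)) * (ZO * W * (2 * tv * M ^ r))) / (ZO * W * m ^ r)"
  proof (intro frac_le mult_left_mono)
    show "(\<Sum>c\<in>UNIV. \<bar>u c - v c\<bar>) \<le> real (card (UNIV::'c set)) * (ZO * W * (2 * tv * M ^ r))"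
      by (rule sum_le_card_sup) (use uv in auto)
    show "0 \<le> 2 * (real (card (UNIV::'c set)) * (ZO * W * (2 * tv * M ^ r)))"
      using ZO_pos W0 tv_nn M_ge1 by simp
  qed (use pp Kge Sv in auto)
  also have "\<dots> = 4 * real (card (UNIV::'c set)) * tv * M ^ r / m ^ r"
    using ZO_pos W0 m_pos by (simp add: field_simps)
  finally show ?thesis .
qed

lemma vf_pt: "a \<in> B \<Longrightarrow> y \<in> set (nb G a) - U \<Longrightarrow> \<bar>msg_vf G y a c - p y c\<bar> \<le> 4 * real (card (UNIV::'c set)) * tv * M ^ r / m ^ r"
  using member_le_sum[of c UNIV "\<lambda>c. \<bar>msg_vf G y a c - p y c\<bar>"] vf_approx by force

end



context cavb begin

lemma norm_bnd:
  fixes f :: "'c \<Rightarrow> real"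
  assumes "\<And>c. m \<le> f c \<and> f c \<le> M"
  shows "qq \<le> f s / (\<Sum>c\<in>UNIV. f c) \<and> f s / (\<Sum>c\<in>UNIV. f c) \<le> 1"
proof -
  have fs: "f s \<le> (\<Sum>c\<in>UNIV. f c)" using assms m_pos
    by (intro member_le_sum) (auto intro: order_trans[OF less_imp_le])
  have S: "(\<Sum>c\<in>UNIV. f c) > 0" using fs assms[of s] m_pos by linarith
  have SM: "(\<Sum>c\<in>UNIV. f c) \<le> real (card (UNIV::'c set)) * M"
    using sum_le_card_sup[of "UNIV::'c set" f M] assms by auto
  have 1: "f s / (\<Sum>c\<in>UNIV. f c) \<le> 1" using fs S by simp
  have "qq \<le> f s / (real (card (UNIV::'c set)) * M)"
    unfolding qq_def using assms[of s] M_ge1 by (intro divide_right_mono) auto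
  also have "\<dots> \<le> f s / (\<Sum>c\<in>UNIV. f c)"
    using assms[of s] m_pos S SM by (intro divide_left_mono) auto
  finally show ?thesis using 1 by simp
qed

end

lemma sum_single_ind:
  fixes F :: "('v \<Rightarrow> 'c::finite) \<Rightarrow> real"
  shows "(\<Sum>\<sigma>\<in>configs {x}. F \<sigma> * (if \<sigma> x = c then 1 else 0)) = F (cs {x} c)"
proof -
  have "(\<Sum>\<sigma>\<in>configs {x}. F \<sigma> * (if \<sigma> x = c then 1 else 0)) = (\<Sum>c'\<in>UNIV. F (cs {x} c') * (if c' = c then 1 else 0))"
    unfolding sum_configs_single by (simp add: cs_def)
  also have "\<dots> = F (cs {x} c)" by (simp add: if_distrib[of "(*) _"] cong: if_cong)
  finally show ?thesis .
qed

locale cavx = cavb G "{x}" m M r for G :: "('v,'f,'c::finite) fg" and x m M r +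
  fixes kk :: nat
  assumes dv: "card (dvar G x) \<le> r" and kk: "\<And>a. a \<in> dvar G x \<Longrightarrow> card (set (nb G a)) \<le> kk"
begin

definition "SS = {a\<in>dvar G x. set (nb G a) \<subseteq> {x}}"
definition "F0 = {a\<in>facs G. set (nb G a) = {}}"
definition "tS a c = psi G a (map (cs {x} c) (nb G a)) / (\<Sum>c'\<in>UNIV. psi G a (map (cs {x} c') (nb G a)))"
definition "t b c = (if b \<in> B then esn b c else tS b c)"

lemma dvar_split: "dvar G x = SS \<union> B" "SS \<inter> B = {}"
  by (auto simp: SS_def bdry_def dvar_def)
lemma FU_split: "FU = SS \<union> F0" "SS \<inter> F0 = {}"
  by (auto simp: SS_def FU_def F0_def dvar_def subset_singleton_iff)
lemma finSS: "finite SS" and finF0: "finite F0" and fin_dvar: "finite (dvar G x)"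
  using finF by (auto simp: SS_def F0_def dvar_def)
lemma B_dvar: "B \<subseteq> dvar G x" using dvar_split by auto
lemma xto_x: "b \<in> B \<Longrightarrow> xto G b {x} = x" using xto_U by auto

lemma dvar_bnd: "a \<in> dvar G x \<Longrightarrow> m \<le> psi G a (map \<rho> (nb G a)) \<and> psi G a (map \<rho> (nb G a)) \<le> M"
  using bnd by (auto simp: dvar_def)

lemma tS_bnd: "a \<in> dvar G x \<Longrightarrow> qq \<le> tS a c \<and> tS a c \<le> 1"
  unfolding tS_def by (rule norm_bnd) (rule dvar_bnd)

lemma t_bnd: "b \<in> dvar G x \<Longrightarrow> qq \<le> t b c \<and> t b c \<le> 1"
  unfolding t_def using tS_bnd esn_bnd qq_def by auto

lemma ws_F0: "ws G F0 \<sigma> = ws G F0 \<sigma>'"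
  by (rule ws_cong) (auto simp: F0_def)

lemma msg_self: assumes a: "a \<in> SS" shows "msg_fv G a x c = tS a c"
proof -
  define D where "D = dvar G x - {a}"
  have D: "D \<subseteq> facs G" "D \<inter> FO = {}" by (auto simp: D_def dvar_def FO_def)
  have BD: "B - D = {}" using a B_dvar dvar_split(2) unfolding D_def by blast
  have F0d: "F0 \<inter> dvar G x = {}" by (auto simp: F0_def dvar_def)
  have SSd: "SS \<subseteq> dvar G x" by (auto simp: SS_def)
  have FUD: "FU - D = insert a F0" "a \<notin> F0" using a FU_split F0d SSd unfolding D_def by blast+
  define \<kappa> where "\<kappa> = ws G F0 (cs {x} c)"
  have \<kappa>: "\<kappa> > 0" unfolding \<kappa>_def by (rule ws_pos) (auto simp: F0_def)
  define u where "u s = (\<Sum>\<rho>\<in>configs (vars G). if \<rho> x = s then weight (del_facs G D) \<rho> else 0)" for s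
  have u: "u s = ZO * \<kappa> * psi G a (map (cs {x} s) (nb G a))" for s
  proof -
    have "u s = ZO * (\<Sum>\<sigma>\<in>configs {x}. ws G (FU - D) \<sigma> * (if \<sigma> x = s then 1 else 0) * (\<Sum>\<tau>\<in>configs Y. nu \<tau> * (ws G (B - D) (mrg {x} \<sigma> \<tau>) * 1)))"
      unfolding u_def by (rule msg_unnorm[OF D]) simp
    also have "\<dots> = ZO * (\<Sum>\<sigma>\<in>configs {x}. ws G (FU - D) \<sigma> * (if \<sigma> x = s then 1 else 0))"
      unfolding BD using nu_sum by simp
    also have "\<dots> = ZO * ws G (FU - D) (cs {x} s)"
      using sum_single_ind[of "ws G (FU - D)" x s] by simp
    also have "ws G (FU - D) (cs {x} s) = \<kappa> * psi G a (map (cs {x} s) (nb G a))"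
      unfolding FUD(1) \<kappa>_def using finF0 FUD(2) ws_F0[of "cs {x} s" "cs {x} c"] by (simp add: ws_insert)
    finally show ?thesis by simp
  qed
  have "msg_fv G a x c = u c / (\<Sum>s\<in>UNIV. u s)"
    unfolding msg_fv_def u_def D_def[symmetric] using marg1_ratio2[of "del_facs G D" x c] finV by simp
  also have "\<dots> = tS a c" unfolding u tS_def
    using norm_scale[of "ZO * \<kappa>" "\<lambda>s. psi G a (map (cs {x} s) (nb G a))" c UNIV] ZO_pos \<kappa> by simp
  finally show ?thesis .
qed

lemma bp_self: assumes a: "a \<in> SS" shows "bp_fv G q a x c = tS a c"
proof -
  have nb: "set (nb G a) = {x}" using a by (auto simp: SS_def dvar_def)
  have w: "(\<Sum>\<tau>\<in>configs (set (nb G a)). if \<tau> x = s then psi G a (map \<tau> (nb G a)) * (\<Prod>y\<in>set (nb G a) - {x}. q y a (\<tau> y)) else 0)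
      = psi G a (map (cs {x} s) (nb G a))" for s
  proof -
    have "(\<Sum>\<tau>\<in>configs (set (nb G a)). if \<tau> x = s then psi G a (map \<tau> (nb G a)) * (\<Prod>y\<in>set (nb G a) - {x}. q y a (\<tau> y)) else 0)
        = (\<Sum>\<tau>\<in>configs {x}. psi G a (map \<tau> (nb G a)) * (if \<tau> x = s then 1 else 0))"
      unfolding nb by (intro sum.cong) auto
    thus ?thesis using sum_single_ind by simp
  qed
  show ?thesis unfolding bp_fv_def Let_def w tS_def ..
qed

lemma sum_nb_split:
  assumes a: "a \<in> B"
  shows "(\<Sum>\<tau>\<in>configs (set (nb G a)). if \<tau> x = s then psi G a (map \<tau> (nb G a)) * (\<Prod>y\<in>set (nb G a) - {x}. q y (\<tau> y)) else 0)
     = (\<Sum>\<tau>\<in>configs (set (nb G a) - {x}). Pa a (cs {x} s) \<tau> * (\<Prod>y\<in>set (nb G a) - {x}. q y (\<tau> y)))"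
proof -
  define A where "A = set (nb G a) - {x}"
  have xa: "x \<in> set (nb G a)" using a B_dvar by (auto simp: dvar_def)
  have sp: "set (nb G a) = {x} \<union> A" using xa by (auto simp: A_def)
  have "(\<Sum>\<tau>\<in>configs (set (nb G a)). if \<tau> x = s then psi G a (map \<tau> (nb G a)) * (\<Prod>y\<in>A. q y (\<tau> y)) else 0)
     = (\<Sum>\<sigma>\<in>configs {x}. \<Sum>\<tau>\<in>configs A. if mrg {x} \<sigma> \<tau> x = s then psi G a (map (mrg {x} \<sigma> \<tau>) (nb G a)) * (\<Prod>y\<in>A. q y (mrg {x} \<sigma> \<tau> y)) else 0)"
    unfolding sp by (rule split_sum) (auto simp: A_def)
  also have "\<dots> = (\<Sum>\<sigma>\<in>configs {x}. (\<Sum>\<tau>\<in>configs A. Pa a \<sigma> \<tau> * (\<Prod>y\<in>A. q y (\<tau> y))) * (if \<sigma> x = s then 1 else 0))"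
    unfolding Pa_def sum_distrib_right
    by (intro sum.cong refl) (auto simp: mrg_def A_def intro!: prod.cong)
  also have "\<dots> = (\<Sum>\<tau>\<in>configs A. Pa a (cs {x} s) \<tau> * (\<Prod>y\<in>A. q y (\<tau> y)))"
    by (rule sum_single_ind)
  finally show ?thesis unfolding A_def .
qed

lemma es_A: assumes a: "a \<in> B"
  shows "es a s = (\<Sum>\<tau>\<in>configs (set (nb G a) - {x}). Pa a (cs {x} s) \<tau> * (\<Prod>y\<in>set (nb G a) - {x}. p y (\<tau> y)))"
proof -
  have "es a s = (\<Sum>\<tau>\<in>configs Y. pr Y p \<tau> * Pa a (cs {x} s) \<tau>)" unfolding es_def e_def piY_def ..
  also have "\<dots> = (\<Sum>\<tau>\<in>configs (set (nb G a) - {x}). pr (set (nb G a) - {x}) p \<tau> * Pa a (cs {x} s) \<tau>)"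
    by (rule pr_marg[OF finY B_nbY[OF a] p_sum Pa_loc])
  finally show ?thesis by (simp add: pr_def mult_ac)
qed

definition "dq = 4 * real (card (UNIV::'c set)) * tv * M ^ r / m ^ r"
definition "dm = 4 * real (card (UNIV::'c set)) * tv * M ^ r / m ^ (r + 1)"

lemma dq_nn: "dq \<ge> 0" unfolding dq_def using tv_nn m_pos M_ge1 by simp
lemma dm_nn: "dm \<ge> 0" unfolding dm_def using tv_nn m_pos M_ge1 by simp

lemma bp_B: assumes a: "a \<in> B"
  shows "(\<Sum>c\<in>UNIV. \<bar>esn a c - bp_fv G (msg_vf G) a x c\<bar>)
     \<le> 2 * (real (card (UNIV::'c set)) * (real (card (UNIV::'c set)) ^ kk * (M * (real kk * dq)))) / m"
proof -
  define A where "A = set (nb G a) - {x}"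
  have finA: "finite A" by (simp add: A_def)
  have cA: "card A \<le> kk" using kk[of a] a B_dvar card_mono[of "set (nb G a)" A]
    by (auto simp: A_def)
  define w where "w s = (\<Sum>\<tau>\<in>configs A. Pa a (cs {x} s) \<tau> * (\<Prod>y\<in>A. msg_vf G y a (\<tau> y)))" for s
  have bp: "bp_fv G (msg_vf G) a x c = w c / (\<Sum>s\<in>UNIV. w s)" for c
    unfolding bp_fv_def Let_def w_def A_def using sum_nb_split[OF a, where q="\<lambda>y. msg_vf G y a"] by simp
  have es: "es a s = (\<Sum>\<tau>\<in>configs A. Pa a (cs {x} s) \<tau> * (\<Prod>y\<in>A. p y (\<tau> y)))" for s
    unfolding A_def by (rule es_A[OF a])
  have qbnd: "0 \<le> msg_vf G y a c \<and> msg_vf G y a c \<le> 1" for y c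
    unfolding msg_vf_def using marg1_nonneg[OF wf_del[OF wf]] marg1_le1[OF wf_del[OF wf]] by auto
  have wnn: "w s \<ge> 0" for s unfolding w_def using Pa_bnd[OF a] m_pos qbnd
    by (intro sum_nonneg mult_nonneg_nonneg prod_nonneg) (auto intro: order.trans[OF less_imp_le])
  have esnn: "es a s \<ge> 0" for s using es_bnd[OF a, of s] m_pos by linarith
  have Ses: "(\<Sum>c\<in>UNIV. es a c) \<ge> m" using es_sum_ge[OF a] .
  have diff: "\<bar>w s - es a s\<bar> \<le> real (card (UNIV::'c set)) ^ kk * (M * (real kk * dq))" for s
  proof -
    have "\<bar>w s - es a s\<bar> = \<bar>\<Sum>\<tau>\<in>configs A. Pa a (cs {x} s) \<tau> * ((\<Prod>y\<in>A. msg_vf G y a (\<tau> y)) - (\<Prod>y\<in>A. p y (\<tau> y)))\<bar>"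
      unfolding w_def es by (simp add: sum_subtractf[symmetric] right_diff_distrib)
    also have "\<dots> \<le> (\<Sum>\<tau>\<in>configs A. \<bar>Pa a (cs {x} s) \<tau> * ((\<Prod>y\<in>A. msg_vf G y a (\<tau> y)) - (\<Prod>y\<in>A. p y (\<tau> y)))\<bar>)"
      by (rule sum_abs)
    also have "\<dots> \<le> (\<Sum>\<tau>\<in>(configs A :: ('v \<Rightarrow> 'c) set). M * (real kk * dq))"
    proof (rule sum_mono)
      fix \<tau> :: "'v \<Rightarrow> 'c" assume "\<tau> \<in> configs A"
      have "\<bar>(\<Prod>y\<in>A. msg_vf G y a (\<tau> y)) - (\<Prod>y\<in>A. p y (\<tau> y))\<bar> \<le> (\<Sum>y\<in>A. \<bar>msg_vf G y a (\<tau> y) - p y (\<tau> y)\<bar>)"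
        using qbnd p_nonneg p_le1 finA by (intro prod_diff_le) auto
      also have "\<dots> \<le> real (card A) * dq"
        using vf_pt[OF a] unfolding dq_def by (intro sum_le_card_sup finA) (auto simp: A_def)
      also have "\<dots> \<le> real kk * dq" using cA dq_nn by (intro mult_right_mono) auto
      finally have d: "\<bar>(\<Prod>y\<in>A. msg_vf G y a (\<tau> y)) - (\<Prod>y\<in>A. p y (\<tau> y))\<bar> \<le> real kk * dq" .
      have "\<bar>Pa a (cs {x} s) \<tau>\<bar> \<le> M" using Pa_bnd[OF a, of "cs {x} s" \<tau>] m_pos by (auto simp: abs_le_iff)
      thus "\<bar>Pa a (cs {x} s) \<tau> * ((\<Prod>y\<in>A. msg_vf G y a (\<tau> y)) - (\<Prod>y\<in>A. p y (\<tau> y)))\<bar> \<le> M * (real kk * dq)"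
        unfolding abs_mult using d by (intro mult_mono) auto
    qed
    also have "\<dots> = real (card (configs A :: ('v \<Rightarrow> 'c) set)) * (M * (real kk * dq))" by simp
    also have "\<dots> \<le> real (card (UNIV::'c set)) ^ kk * (M * (real kk * dq))"
    proof (intro mult_right_mono)
      have "card (configs A :: ('v \<Rightarrow> 'c) set) = card (UNIV::'c set) ^ card A"
        unfolding configs_def using finA by (simp add: card_PiE)
      also have "\<dots> \<le> card (UNIV::'c set) ^ kk" using cA by (intro power_increasing) (auto simp: Suc_le_eq card_gt_0_iff)
      finally show "real (card (configs A :: ('v \<Rightarrow> 'c) set)) \<le> real (card (UNIV::'c set)) ^ kk"
        by (metis of_nat_le_iff of_nat_power)
      show "0 \<le> M * (real kk * dq)" using M_ge1 dq_nn by simp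
    qed
    finally show ?thesis .
  qed
  have "(\<Sum>c\<in>UNIV. \<bar>esn a c - bp_fv G (msg_vf G) a x c\<bar>) = (\<Sum>c\<in>UNIV. \<bar>w c / (\<Sum>s\<in>UNIV. w s) - es a c / (\<Sum>s\<in>UNIV. es a s)\<bar>)"
    unfolding bp esn_def by (intro sum.cong) (auto simp: abs_minus_commute)
  also have "\<dots> \<le> 2 * (\<Sum>c\<in>UNIV. \<bar>w c - es a c\<bar>) / (\<Sum>s\<in>UNIV. es a s)"
    using norm_L1[of UNIV w "es a"] wnn esnn Ses m_pos by simp
  also have "\<dots> \<le> 2 * (real (card (UNIV::'c set)) * (real (card (UNIV::'c set)) ^ kk * (M * (real kk * dq)))) / m"
  proof (intro frac_le mult_left_mono)
    show "(\<Sum>c\<in>UNIV. \<bar>w c - es a c\<bar>) \<le> real (card (UNIV::'c set)) * (real (card (UNIV::'c set)) ^ kk * (M * (real kk * dq)))"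
      by (rule sum_le_card_sup) (use diff in auto)
    show "0 \<le> 2 * (real (card (UNIV::'c set)) * (real (card (UNIV::'c set)) ^ kk * (M * (real kk * dq))))"
      using M_ge1 dq_nn by simp
  qed (use Ses m_pos in auto)
  finally show ?thesis .
qed

end



context cavx begin

lemma fv_bp: assumes a: "a \<in> dvar G x"
  shows "(\<Sum>c\<in>UNIV. \<bar>msg_fv G a x c - bp_fv G (msg_vf G) a x c\<bar>)
    \<le> dm + 2 * (real (card (UNIV::'c set)) * (real (card (UNIV::'c set)) ^ kk * (M * (real kk * dq)))) / m"
proof (cases "a \<in> SS")
  case True
  have "(\<Sum>c\<in>UNIV. \<bar>msg_fv G a x c - bp_fv G (msg_vf G) a x c\<bar>) = 0"
    using msg_self[OF True] bp_self[OF True] by simp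
  moreover have "0 \<le> 2 * (real (card (UNIV::'c set)) * (real (card (UNIV::'c set)) ^ kk * (M * (real kk * dq)))) / m"
    using M_ge1 dq_nn m_pos by simp
  ultimately show ?thesis using dm_nn by linarith
next
  case False
  hence aB: "a \<in> B" using a dvar_split by auto
  have "(\<Sum>c\<in>UNIV. \<bar>msg_fv G a x c - bp_fv G (msg_vf G) a x c\<bar>) \<le>
     (\<Sum>c\<in>UNIV. \<bar>msg_fv G a x c - esn a c\<bar>) + (\<Sum>c\<in>UNIV. \<bar>esn a c - bp_fv G (msg_vf G) a x c\<bar>)"
    by (rule L1_triangle)
  also have "(\<Sum>c\<in>UNIV. \<bar>msg_fv G a x c - esn a c\<bar>) \<le> dm"
    using msg_approx[OF aB] xto_x[OF aB] unfolding dm_def by simp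
  finally show ?thesis using bp_B[OF aB] by linarith
qed

lemma vf_bp: assumes a: "a \<in> dvar G x"
  shows "(\<Sum>c\<in>UNIV. \<bar>msg_vf G x a c - bp_vf G (msg_fv G) x a c\<bar>)
    \<le> 4 * tv * M ^ r / m ^ r + 2 * (real (card (UNIV::'c set)) * (real r * dm)) / qq ^ r"
proof -
  have D: "{a} \<subseteq> facs G" "{a} \<inter> FO = {}" using a by (auto simp: dvar_def FO_def)
  define wc where "wc c = ws G (FU - {a}) (cs {x} c)" for c
  have wc0: "wc c > 0" for c unfolding wc_def by (rule ws_pos) (auto simp: FU_def)
  define u where "u c = (\<Sum>\<rho>\<in>configs (vars G). if \<rho> x = c then weight (del_facs G {a}) \<rho> else 0)" for c
  define v where "v c = ZO * wc c * (\<Prod>b\<in>B - {a}. es b c)" for c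
  have u: "u c = ZO * (wc c * (\<Sum>\<tau>\<in>configs Y. nu \<tau> * ws G (B - {a}) (mrg {x} (cs {x} c) \<tau>)))" for c
  proof -
    have "u c = ZO * (\<Sum>\<sigma>\<in>configs {x}. ws G (FU - {a}) \<sigma> * (if \<sigma> x = c then 1 else 0) * (\<Sum>\<tau>\<in>configs Y. nu \<tau> * (ws G (B - {a}) (mrg {x} \<sigma> \<tau>) * 1)))"
      unfolding u_def by (rule msg_unnorm[OF D]) simp
    also have "(\<Sum>\<sigma>\<in>configs {x}. ws G (FU - {a}) \<sigma> * (if \<sigma> x = c then 1 else 0) * (\<Sum>\<tau>\<in>configs Y. nu \<tau> * (ws G (B - {a}) (mrg {x} \<sigma> \<tau>) * 1)))
       = (\<Sum>\<sigma>\<in>configs {x}. (ws G (FU - {a}) \<sigma> * (\<Sum>\<tau>\<in>configs Y. nu \<tau> * ws G (B - {a}) (mrg {x} \<sigma> \<tau>))) * (if \<sigma> x = c then 1 else 0))"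
      by (intro sum.cong) auto
    also have "\<dots> = wc c * (\<Sum>\<tau>\<in>configs Y. nu \<tau> * ws G (B - {a}) (mrg {x} (cs {x} c) \<tau>))"
      unfolding wc_def by (rule sum_single_ind)
    finally show ?thesis .
  qed
  have pe: "(\<Sum>\<tau>\<in>configs Y. piY \<tau> * ws G (B - {a}) (mrg {x} (cs {x} c) \<tau>)) = (\<Prod>b\<in>B - {a}. es b c)" for c
    unfolding es_def by (rule E_prod) auto
  have bndB: "\<bar>ws G (B - {a}) (mrg {x} (cs {x} c) \<tau>)\<bar> \<le> M ^ r" for c \<tau>
  proof -
    have "0 \<le> m ^ r" using m_pos by simp
    thus ?thesis using ws_B_bnd[of "B - {a}" "cs {x} c" \<tau>] by (auto simp: abs_le_iff)
  qed
  have uv: "\<bar>u c - v c\<bar> \<le> ZO * wc c * (2 * tv * M ^ r)" for c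
  proof -
    have "\<bar>u c - v c\<bar> = ZO * wc c * \<bar>(\<Sum>\<tau>\<in>configs Y. nu \<tau> * ws G (B - {a}) (mrg {x} (cs {x} c) \<tau>)) - (\<Sum>\<tau>\<in>configs Y. piY \<tau> * ws G (B - {a}) (mrg {x} (cs {x} c) \<tau>))\<bar>"
      unfolding u v_def pe[symmetric] using ZO_pos wc0[of c] by (simp add: mult.assoc right_diff_distrib[symmetric] abs_mult)
    also have "\<dots> \<le> ZO * wc c * (2 * tv * M ^ r)"
      using approx[OF bndB] ZO_pos wc0[of c] by (intro mult_left_mono) auto
    finally show ?thesis .
  qed
  have prodB: "(\<Prod>b\<in>B - {a}. es b c) \<ge> m ^ r" for c
  proof (rule prod_bnd_low)
    show "card (B - {a}) \<le> r" using rB card_mono[OF finB, of "B - {a}"] by auto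
  qed (use finB es_bnd m_pos m_le1 in auto)
  have vge: "v c \<ge> ZO * wc c * m ^ r" for c unfolding v_def using prodB[of c] ZO_pos wc0[of c] by simp
  define Wc where "Wc = (\<Sum>c\<in>UNIV. wc c)"
  have Wc0: "Wc > 0" unfolding Wc_def using wc0 by (intro sum_pos) auto
  have Sv: "(\<Sum>c\<in>UNIV. v c) \<ge> ZO * Wc * m ^ r"
  proof -
    have "ZO * Wc * m ^ r = (\<Sum>c\<in>UNIV. ZO * wc c * m ^ r)" unfolding Wc_def by (simp add: sum_distrib_left sum_distrib_right)
    also have "\<dots> \<le> (\<Sum>c\<in>UNIV. v c)" by (intro sum_mono vge)
    finally show ?thesis .
  qed
  have pp: "ZO * Wc * m ^ r > 0" using ZO_pos Wc0 m_pos by simp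
  have vnn: "v c \<ge> 0" for c using vge[of c] ZO_pos wc0[of c] m_pos
    by (meson less_imp_le mult_pos_pos order.trans zero_less_power)
  have unn: "u c \<ge> 0" for c unfolding u_def using weight_nn[OF wf_del[OF wf, of "{a}"]] by (intro sum_nonneg) auto
  have msg: "msg_vf G x a c = u c / (\<Sum>c\<in>UNIV. u c)" for c
    unfolding msg_vf_def u_def using marg1_ratio2[of "del_facs G {a}" x c] finV by simp
  have part1: "(\<Sum>c\<in>UNIV. \<bar>msg_vf G x a c - v c / (\<Sum>c\<in>UNIV. v c)\<bar>) \<le> 4 * tv * M ^ r / m ^ r"
  proof -
    have "(\<Sum>c\<in>UNIV. \<bar>msg_vf G x a c - v c / (\<Sum>c\<in>UNIV. v c)\<bar>) \<le> 2 * (\<Sum>c\<in>UNIV. \<bar>u c - v c\<bar>) / (\<Sum>c\<in>UNIV. v c)"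
      unfolding msg using norm_L1[of UNIV u v] unn vnn Sv pp by simp
    also have "\<dots> \<le> 2 * (ZO * Wc * (2 * tv * M ^ r)) / (ZO * Wc * m ^ r)"
    proof (intro frac_le mult_left_mono)
      have "(\<Sum>c\<in>UNIV. \<bar>u c - v c\<bar>) \<le> (\<Sum>c\<in>UNIV. ZO * wc c * (2 * tv * M ^ r))" by (intro sum_mono uv)
      thus "(\<Sum>c\<in>UNIV. \<bar>u c - v c\<bar>) \<le> ZO * Wc * (2 * tv * M ^ r)"
        unfolding Wc_def by (simp add: sum_distrib_left sum_distrib_right mult_ac)
      show "0 \<le> 2 * (ZO * Wc * (2 * tv * M ^ r))" using ZO_pos Wc0 tv_nn M_ge1 by simp
    qed (use pp Sv in auto)
    also have "\<dots> = 4 * tv * M ^ r / m ^ r" using ZO_pos Wc0 m_pos by (simp add: field_simps)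
    finally show ?thesis .
  qed
  define T where "T c = (\<Prod>b\<in>dvar G x - {a}. t b c)" for c
  define Zb where "Zb b = (\<Sum>c'\<in>UNIV. psi G b (map (cs {x} c') (nb G b)))" for b
  define Sb where "Sb b = (\<Sum>c'\<in>UNIV. es b c')" for b
  define \<kappa> where "\<kappa> = ws G F0 (cs {x} undefined)"
  have \<kappa>0: "\<kappa> > 0" unfolding \<kappa>_def by (rule ws_pos) (auto simp: F0_def)
  have Zb0: "Zb b > 0" if "b \<in> dvar G x" for b
    unfolding Zb_def using dvar_bnd[OF that] m_pos by (intro sum_pos) (auto intro: less_le_trans)
  have Sb0: "Sb b > 0" if "b \<in> B" for b unfolding Sb_def using es_sum_ge[OF that] m_pos by linarith
  define K where "K = ZO * \<kappa> * (\<Prod>b\<in>SS - {a}. Zb b) * (\<Prod>b\<in>B - {a}. Sb b)"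
  have K0: "K > 0" unfolding K_def using ZO_pos \<kappa>0 Zb0 Sb0 dvar_split
    by (intro mult_pos_pos prod_pos) auto
  have F0d: "F0 \<inter> dvar G x = {}" by (auto simp: F0_def dvar_def)
  have SSd: "SS \<subseteq> dvar G x" by (auto simp: SS_def)
  have FUa: "FU - {a} = F0 \<union> (SS - {a})" "F0 \<inter> (SS - {a}) = {}" using FU_split F0d SSd a by blast+
  have dva: "dvar G x - {a} = (SS - {a}) \<union> (B - {a})" "(SS - {a}) \<inter> (B - {a}) = {}" using dvar_split by blast+
  have vT: "v c = K * T c" for c
  proof -
    have wcc: "wc c = \<kappa> * (\<Prod>b\<in>SS - {a}. psi G b (map (cs {x} c) (nb G b)))"
    proof -
      have "wc c = ws G F0 (cs {x} c) * ws G (SS - {a}) (cs {x} c)"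
        unfolding wc_def FUa(1) using finF0 finSS FUa(2) by (intro ws_union) auto
      thus ?thesis unfolding \<kappa>_def using ws_F0[of "cs {x} c" "cs {x} undefined"] by (simp add: ws_def)
    qed
    have ps: "(\<Prod>b\<in>SS - {a}. psi G b (map (cs {x} c) (nb G b))) = (\<Prod>b\<in>SS - {a}. Zb b) * (\<Prod>b\<in>SS - {a}. t b c)"
      unfolding prod.distrib[symmetric]
    proof (intro prod.cong refl)
      fix b assume b: "b \<in> SS - {a}"
      hence bd: "b \<in> dvar G x" "b \<notin> B" using SSd dvar_split by auto
      show "psi G b (map (cs {x} c) (nb G b)) = Zb b * t b c"
        unfolding t_def tS_def Zb_def[symmetric] using bd Zb0[OF bd(1)] by simp
    qed
    have es: "(\<Prod>b\<in>B - {a}. es b c) = (\<Prod>b\<in>B - {a}. Sb b) * (\<Prod>b\<in>B - {a}. t b c)"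
      unfolding prod.distrib[symmetric]
    proof (intro prod.cong refl)
      fix b assume b: "b \<in> B - {a}"
      show "es b c = Sb b * t b c" unfolding t_def esn_def Sb_def[symmetric] using b Sb0[of b] by simp
    qed
    have T: "T c = (\<Prod>b\<in>SS - {a}. t b c) * (\<Prod>b\<in>B - {a}. t b c)"
      unfolding T_def dva(1) using finSS finB dva(2) by (intro prod.union_disjoint) auto
    show ?thesis unfolding v_def wcc ps es T K_def by (simp add: mult_ac)
  qed
  have vn: "v c / (\<Sum>c\<in>UNIV. v c) = T c / (\<Sum>c\<in>UNIV. T c)" for c
    unfolding vT using norm_scale[of K T c UNIV] K0 by simp
  define g where "g c = (\<Prod>b\<in>dvar G x - {a}. msg_fv G b x c)" for c
  have bp: "bp_vf G (msg_fv G) x a c = g c / (\<Sum>c\<in>UNIV. g c)" for c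
    unfolding bp_vf_def Let_def g_def ..
  have cd: "card (dvar G x - {a}) \<le> r" using dv card_mono[OF fin_dvar, of "dvar G x - {a}"] by auto
  have Tq: "T c \<ge> qq ^ r" for c unfolding T_def
    using fin_dvar cd t_bnd qq_bnd by (intro prod_bnd_low) auto
  have Tnn: "T c \<ge> 0" for c using Tq[of c] qq_pos by (meson order.trans zero_le_power less_imp_le)
  have gnn: "g c \<ge> 0" for c unfolding g_def using msg_bnd by (intro prod_nonneg) auto
  obtain c0 :: 'c where True by blast
  have ST: "(\<Sum>c\<in>UNIV. T c) \<ge> qq ^ r"
    using member_le_sum[of c0 UNIV T] Tnn Tq[of c0] by force
  have qpos: "qq ^ r > 0" using qq_pos by simp
  have gT: "\<bar>g c - T c\<bar> \<le> real r * dm" for c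
  proof -
    have "\<bar>g c - T c\<bar> \<le> (\<Sum>b\<in>dvar G x - {a}. \<bar>msg_fv G b x c - t b c\<bar>)"
      unfolding g_def T_def using fin_dvar msg_bnd t_bnd qq_bnd
      by (intro prod_diff_le) (auto intro: order.trans)
    also have "\<dots> \<le> real (card (dvar G x - {a})) * dm"
    proof (intro sum_le_card_sup)
      fix b assume b: "b \<in> dvar G x - {a}"
      show "\<bar>msg_fv G b x c - t b c\<bar> \<le> dm"
      proof (cases "b \<in> B")
        case True
        thus ?thesis using msg_pt[OF True, of c] xto_x[OF True] unfolding t_def dm_def by simp
      next
        case False
        hence "b \<in> SS" using b dvar_split by auto
        thus ?thesis using msg_self False dm_nn unfolding t_def by simp
      qed
    qed (use fin_dvar in auto)
    also have "\<dots> \<le> real r * dm" using cd dm_nn by (intro mult_right_mono) auto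
    finally show ?thesis .
  qed
  have part2: "(\<Sum>c\<in>UNIV. \<bar>v c / (\<Sum>c\<in>UNIV. v c) - bp_vf G (msg_fv G) x a c\<bar>) \<le> 2 * (real (card (UNIV::'c set)) * (real r * dm)) / qq ^ r"
  proof -
    have "(\<Sum>c\<in>UNIV. \<bar>v c / (\<Sum>c\<in>UNIV. v c) - bp_vf G (msg_fv G) x a c\<bar>) = (\<Sum>c\<in>UNIV. \<bar>g c / (\<Sum>c\<in>UNIV. g c) - T c / (\<Sum>c\<in>UNIV. T c)\<bar>)"
      unfolding vn bp by (intro sum.cong) (auto simp: abs_minus_commute)
    also have "\<dots> \<le> 2 * (\<Sum>c\<in>UNIV. \<bar>g c - T c\<bar>) / (\<Sum>c\<in>UNIV. T c)"
      using norm_L1[of UNIV g T] gnn Tnn ST qpos by simp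
    also have "\<dots> \<le> 2 * (real (card (UNIV::'c set)) * (real r * dm)) / qq ^ r"
    proof (intro frac_le mult_left_mono)
      show "(\<Sum>c\<in>UNIV. \<bar>g c - T c\<bar>) \<le> real (card (UNIV::'c set)) * (real r * dm)"
        by (rule sum_le_card_sup) (use gT in auto)
      show "0 \<le> 2 * (real (card (UNIV::'c set)) * (real r * dm))" using dm_nn by simp
    qed (use ST qpos in auto)
    finally show ?thesis .
  qed
  show ?thesis using L1_triangle[of "msg_vf G x a" "bp_vf G (msg_fv G) x a" UNIV "\<lambda>c. v c / (\<Sum>c\<in>UNIV. v c)"] part1 part2
    by linarith
qed

end



lemma psi_range:
  fixes Psi :: "('c::finite list \<Rightarrow> real) set"
  assumes "finite Psi" "\<forall>\<psi>\<in>Psi. \<forall>\<tau>. length \<tau> = k \<longrightarrow> \<psi> \<tau> > 0"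
  defines "S \<equiv> insert 1 ((\<lambda>(\<psi>, \<tau>). \<psi> \<tau>) ` (Psi \<times> {\<tau>::'c list. length \<tau> = k}))"
  shows "finite S" "Min S > 0" "Min S \<le> 1" "1 \<le> Max S"
    "\<And>G a \<rho>. psi_in G k Psi a \<Longrightarrow> Min S \<le> psi G a (map \<rho> (nb G a)) \<and> psi G a (map \<rho> (nb G a)) \<le> Max S"
proof -
  have fl: "finite {\<tau>::'c list. length \<tau> = k}"
    using finite_lists_length_eq[of "UNIV::'c set" k] by simp
  show fS: "finite S" unfolding S_def using assms(1) fl by simp
  have ne: "S \<noteq> {}" unfolding S_def by simp
  have pos: "\<And>s. s \<in> S \<Longrightarrow> s > 0" unfolding S_def using assms(2) by auto
  show "Min S > 0" using Min_in[OF fS ne] pos by simp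
  show "Min S \<le> 1" using Min_le[OF fS] unfolding S_def by simp
  show "1 \<le> Max S" using Max_ge[OF fS] unfolding S_def by simp
  fix G :: "('v,'f,'c) fg" and a \<rho>
  assume pi: "psi_in G k Psi a"
  then obtain \<psi> where \<psi>: "\<psi> \<in> Psi" "\<forall>\<tau>. length \<tau> = k \<longrightarrow> psi G a \<tau> = \<psi> \<tau>" and len: "length (nb G a) = k"
    unfolding psi_in_def by blast
  have "psi G a (map \<rho> (nb G a)) = \<psi> (map \<rho> (nb G a))" using \<psi> len by simp
  moreover have "\<psi> (map \<rho> (nb G a)) \<in> S" unfolding S_def using \<psi>(1) len by force
  ultimately show "Min S \<le> psi G a (map \<rho> (nb G a)) \<and> psi G a (map \<rho> (nb G a)) \<le> Max S"
    using Min_le[OF fS] Max_ge[OF fS] by simp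
qed

theorem lemma3p6:
  fixes Psi :: "('c::finite list \<Rightarrow> real) set" and k :: nat
  assumes "k \<ge> 2" and "finite Psi"
    and "\<forall>\<psi>\<in>Psi. \<forall>\<tau>. length \<tau> = k \<longrightarrow> \<psi> \<tau> > 0"
  shows "\<forall>\<epsilon>>0. \<forall>R>(0::real). \<exists>\<epsilon>'>0.
    (\<forall>(G :: (nat, nat, 'c) fg) U.
       fg_wf G \<and> cavity G U \<and> real (card U) \<le> R \<and> real (card (bdry G U)) \<le> R \<and>
       (\<forall>a\<in>facs G. set (nb G a) \<inter> U \<noteq> {} \<longrightarrow> psi_in G k Psi a) \<and>
       tv_prod (del_facs G (bdry G U)) (dist2 G U) < \<epsilon>'
       \<longrightarrow> (\<Sum>\<sigma>\<in>configs U. \<bar>barmu G U \<sigma> - marg G U \<sigma>\<bar>) < \<epsilon>) \<and>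
    (\<forall>(G :: (nat, nat, 'c) fg) x.
       fg_wf G \<and> cavity G {x} \<and> real (card (dvar G x)) \<le> R \<and>
       (\<forall>a\<in>dvar G x. psi_in G k Psi a) \<and>
       tv_prod (del_facs G (bdry G {x})) (dist2 G {x}) < \<epsilon>'
       \<longrightarrow> (\<Sum>a\<in>dvar G x. \<Sum>c\<in>UNIV.
              \<bar>msg_vf G x a c - bp_vf G (msg_fv G) x a c\<bar> +
              \<bar>msg_fv G a x c - bp_fv G (msg_vf G) a x c\<bar>) < \<epsilon>)"
proof (intro allI impI)
  fix \<epsilon> R :: real assume \<epsilon>: "\<epsilon> > 0" and R: "R > 0"
  define S where "S = insert 1 ((\<lambda>(\<psi>, \<tau>). \<psi> \<tau>) ` (Psi \<times> {\<tau>::'c list. length \<tau> = k}))"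
  define m where "m = Min S"
  define M where "M = Max S"
  have m0: "m > 0" "m \<le> 1" and M1: "1 \<le> M"
    using psi_range[OF assms(2,3)] unfolding m_def M_def S_def by auto
  have bndpsi: "m \<le> psi G a (map \<rho> (nb G a)) \<and> psi G a (map \<rho> (nb G a)) \<le> M"
    if "psi_in G k Psi a" for G :: "(nat, nat, 'c) fg" and a \<rho>
    using psi_range(5)[OF assms(2,3) that] unfolding m_def M_def S_def .
  define r where "r = nat \<lceil>R\<rceil>"
  have rR: "\<And>n::nat. real n \<le> R \<Longrightarrow> n \<le> r" unfolding r_def by linarith
  define C where "C = real (card (UNIV::'c set))"
  have C1: "C \<ge> 1" unfolding C_def by (simp add: Suc_le_eq card_gt_0_iff)
  define q where "q = m / (C * M)"
  have q0: "q > 0" unfolding q_def using m0 M1 C1 by simp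
  define K1 where "K1 = 2 * (real r * (4 * C * M ^ r / m ^ (r + 1))) / q ^ r + 4 * M ^ r / m ^ r"
  define K2 where "K2 = 4 * C * M ^ r / m ^ (r + 1) + 2 * (C * (C ^ k * (M * (real k * (4 * C * M ^ r / m ^ r))))) / m"
  define K3 where "K3 = 4 * M ^ r / m ^ r + 2 * (C * (real r * (4 * C * M ^ r / m ^ (r + 1)))) / q ^ r"
  have K1: "K1 \<ge> 0" and K2: "K2 \<ge> 0" and K3: "K3 \<ge> 0"
    unfolding K1_def K2_def K3_def using m0 M1 C1 q0 by simp_all
  define K where "K = K1 + real r * (K2 + K3)"
  have K: "K \<ge> 0" "K1 \<le> K" "real r * (K2 + K3) \<le> K" unfolding K_def using K1 K2 K3 by simp_all
  define \<epsilon>' where "\<epsilon>' = \<epsilon> / (K + 1)"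
  have e': "\<epsilon>' > 0" unfolding \<epsilon>'_def using \<epsilon> K by simp
  have key: "\<And>t L. 0 \<le> t \<Longrightarrow> t < \<epsilon>' \<Longrightarrow> 0 \<le> L \<Longrightarrow> L \<le> K \<Longrightarrow> t * L < \<epsilon>"
  proof -
    fix t L :: real assume t: "0 \<le> t" "t < \<epsilon>'" and L: "0 \<le> L" "L \<le> K"
    have "t * L \<le> \<epsilon>' * K" using t L K by (intro mult_mono) auto
    also have "\<epsilon>' * K < \<epsilon>" unfolding \<epsilon>'_def using \<epsilon> K by (simp add: field_simps)
    finally show "t * L < \<epsilon>" .
  qed
  show "\<exists>\<epsilon>'>0. (\<forall>(G :: (nat, nat, 'c) fg) U.
       fg_wf G \<and> cavity G U \<and> real (card U) \<le> R \<and> real (card (bdry G U)) \<le> R \<and>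
       (\<forall>a\<in>facs G. set (nb G a) \<inter> U \<noteq> {} \<longrightarrow> psi_in G k Psi a) \<and>
       tv_prod (del_facs G (bdry G U)) (dist2 G U) < \<epsilon>'
       \<longrightarrow> (\<Sum>\<sigma>\<in>configs U. \<bar>barmu G U \<sigma> - marg G U \<sigma>\<bar>) < \<epsilon>) \<and>
    (\<forall>(G :: (nat, nat, 'c) fg) x.
       fg_wf G \<and> cavity G {x} \<and> real (card (dvar G x)) \<le> R \<and>
       (\<forall>a\<in>dvar G x. psi_in G k Psi a) \<and>
       tv_prod (del_facs G (bdry G {x})) (dist2 G {x}) < \<epsilon>'
       \<longrightarrow> (\<Sum>a\<in>dvar G x. \<Sum>c\<in>UNIV.
              \<bar>msg_vf G x a c - bp_vf G (msg_fv G) x a c\<bar> +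
              \<bar>msg_fv G a x c - bp_fv G (msg_vf G) a x c\<bar>) < \<epsilon>)"
  proof (intro exI[of _ \<epsilon>'] conjI allI impI e')
    fix G :: "(nat, nat, 'c) fg" and U
    assume h: "fg_wf G \<and> cavity G U \<and> real (card U) \<le> R \<and> real (card (bdry G U)) \<le> R \<and>
       (\<forall>a\<in>facs G. set (nb G a) \<inter> U \<noteq> {} \<longrightarrow> psi_in G k Psi a) \<and>
       tv_prod (del_facs G (bdry G U)) (dist2 G U) < \<epsilon>'"
    interpret I: cavb G U m M r
    proof (unfold_locales)
      show "fg_wf G" "cavity G U" using h by auto
      show "0 < m" "m \<le> 1" "1 \<le> M" using m0 M1 by auto
      show "card (bdry G U) \<le> r" using h rR by auto
      fix a \<rho> assume "a \<in> facs G" "set (nb G a) \<inter> U \<noteq> {}"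
      thus "m \<le> psi G a (map \<rho> (nb G a)) \<and> psi G a (map \<rho> (nb G a)) \<le> M" using h bndpsi by blast
    qed
    have tv: "I.tv < \<epsilon>'" "0 \<le> I.tv" using h I.tv_nn unfolding I.tv_def by auto
    have "(\<Sum>\<sigma>\<in>configs U. \<bar>barmu G U \<sigma> - marg G U \<sigma>\<bar>) \<le> I.tv * K1"
      using I.part1 unfolding I.qq_def K1_def q_def C_def using m0 q0
      by (simp add: field_simps)
    also have "\<dots> < \<epsilon>" using key[OF tv(2) tv(1) K1 K(2)] .
    finally show "(\<Sum>\<sigma>\<in>configs U. \<bar>barmu G U \<sigma> - marg G U \<sigma>\<bar>) < \<epsilon>" .
  next
    fix G :: "(nat, nat, 'c) fg" and x
    assume h: "fg_wf G \<and> cavity G {x} \<and> real (card (dvar G x)) \<le> R \<and>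
       (\<forall>a\<in>dvar G x. psi_in G k Psi a) \<and>
       tv_prod (del_facs G (bdry G {x})) (dist2 G {x}) < \<epsilon>'"
    have wf: "fg_wf G" using h by blast
    have bd: "bdry G {x} \<subseteq> dvar G x" by (auto simp: bdry_def dvar_def)
    have fd: "finite (dvar G x)" using wf by (auto simp: fg_wf_def dvar_def)
    have dvr: "card (dvar G x) \<le> r" using h rR by auto
    interpret I: cavx G x m M r k
    proof (unfold_locales)
      show "fg_wf G" "cavity G {x}" using h by auto
      show "0 < m" "m \<le> 1" "1 \<le> M" using m0 M1 by auto
      show "card (bdry G {x}) \<le> r" using card_mono[OF fd bd] dvr by simp
      show "card (dvar G x) \<le> r" by (rule dvr)
      fix a \<rho> assume "a \<in> facs G" "set (nb G a) \<inter> {x} \<noteq> {}"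
      hence "a \<in> dvar G x" by (auto simp: dvar_def)
      thus "m \<le> psi G a (map \<rho> (nb G a)) \<and> psi G a (map \<rho> (nb G a)) \<le> M" using h bndpsi by blast
    next
      fix a assume "a \<in> dvar G x"
      hence "length (nb G a) = k" using h unfolding psi_in_def by blast
      thus "card (set (nb G a)) \<le> k" using card_length by metis
    qed
    have tv: "I.tv < \<epsilon>'" "0 \<le> I.tv" using h I.tv_nn unfolding I.tv_def by auto
    have b2: "(\<Sum>c\<in>UNIV. \<bar>msg_fv G a x c - bp_fv G (msg_vf G) a x c\<bar>) \<le> I.tv * K2" if "a \<in> dvar G x" for a
      using I.fv_bp[OF that] unfolding I.dm_def I.dq_def K2_def C_def using m0
      by (simp add: field_simps)
    have b3: "(\<Sum>c\<in>UNIV. \<bar>msg_vf G x a c - bp_vf G (msg_fv G) x a c\<bar>) \<le> I.tv * K3" if "a \<in> dvar G x" for a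
      using I.vf_bp[OF that] unfolding I.dm_def I.qq_def K3_def C_def q_def using m0 q0
      by (simp add: field_simps)
    have "(\<Sum>a\<in>dvar G x. \<Sum>c\<in>UNIV. \<bar>msg_vf G x a c - bp_vf G (msg_fv G) x a c\<bar> + \<bar>msg_fv G a x c - bp_fv G (msg_vf G) a x c\<bar>)
       \<le> (\<Sum>a\<in>dvar G x. I.tv * (K2 + K3))"
    proof (intro sum_mono)
      fix a assume a: "a \<in> dvar G x"
      show "(\<Sum>c\<in>UNIV. \<bar>msg_vf G x a c - bp_vf G (msg_fv G) x a c\<bar> + \<bar>msg_fv G a x c - bp_fv G (msg_vf G) a x c\<bar>) \<le> I.tv * (K2 + K3)"
        using b2[OF a] b3[OF a] by (simp add: sum.distrib algebra_simps)
    qed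
    also have "\<dots> = I.tv * (real (card (dvar G x)) * (K2 + K3))" by simp
    also have "\<dots> < \<epsilon>"
    proof (rule key[OF tv(2) tv(1)])
      show "0 \<le> real (card (dvar G x)) * (K2 + K3)" using K2 K3 by simp
      have "real (card (dvar G x)) * (K2 + K3) \<le> real r * (K2 + K3)" using dvr K2 K3 by (intro mult_right_mono) auto
      thus "real (card (dvar G x)) * (K2 + K3) \<le> K" using K(3) by linarith
    qed
    finally show "(\<Sum>a\<in>dvar G x. \<Sum>c\<in>UNIV. \<bar>msg_vf G x a c - bp_vf G (msg_fv G) x a c\<bar> + \<bar>msg_fv G a x c - bp_fv G (msg_vf G) a x c\<bar>) < \<epsilon>" .
  qed
qed



end
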